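(* Let $\nu_0=0$, $s>0$, $\gamma\ge0$, $u>0$, and let $g_\infty=\lim_{r\to\infty}g_r$ and $y_\infty(y_0)=\lim_{t\to\infty}y(t;y_0)$. Then $g_\infty(y_\infty(1))=1$, and for all $y_0\in[0,1)$: (i) if $0<u<s$, or $u=s<\gamma$, then $g_\infty(y_\infty(y_0))=0$; (ii) if $u>\check u$, or $s\ge\gamma$ and $s\le u\le\check u$, then $g_\infty(y_\infty(y_0))=1$; (iii) if $s<\gamma$ and $s<u\le\check u$, then $g_\infty(y_\infty(y_0))=0$ if $y_0\le\bar y_3$, and $g_\infty(y_\infty(y_0))=1$ if $y_0>\bar y_3$.
   Context: $y(t;y_0)$ solves $\dot y=-y(1-y)[s+\gamma(1-y)]+u(1-y)$, $y(0)=y_0$. For $\gamma>0$: $\check u=\frac1\gamma\big(\frac{s+\gamma}2\big)^2$, $\sigma=(1+s/\gamma)^2-4u/\gamma$, and, when $\sigma\ge0$, $\bar y_3=\frac12(1+\frac s\gamma+\sqrt\sigma)$. For $\gamma=0$, set $\check u=+\infty$. Embedded ASG process $(a_r)_{r\ge0}$: a random finite rooted tree started from a single unmarked root. Independently at each leaf: at rate $s$, two children (left, right) are attached; at rate $\gamma$, three children (left, middle, right) are attached; at rate $u$, one child is attached and the leaf is marked $\times$. Typing: vertex types propagate from the leaf types towards the root. A $\times$-marked vertex has type 1; an outdegree-2 vertex has type 1 iff both children have type 1; an outdegree-3 vertex has type 0 iff its left child has type 0 or its middle and right children both have type 0. Ancestral leaf $\lambda_v$: a leaf is its own ancestral leaf.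 For outdegree 2, take $\lambda$ of the right child if it has type 0, else $\lambda$ of the left child. For outdegree 3, take $\lambda$ of the right child if the middle and right children both have type 0, else $\lambda$ of the left child. For outdegree 1, take $\lambda$ of the child. $g_r(y_0)$ is the probability that the ancestral leaf of the root of $a_r$ has type 1 when the leaves are typed independently, each with type 1 with probability $y_0$. *)

theory Defs
  imports "HOL-Analysis.Analysis" "HOL-Library.Extended_Real"
begin

definition drift :: "real \<Rightarrow> real \<Rightarrow> real \<Rightarrow> real \<Rightarrow> real" where
  "drift s \<gamma> u y = - y * (1 - y) * (s + \<gamma> * (1 - y)) + u * (1 - y)"

definition ucheck :: "real \<Rightarrow> real \<Rightarrow> ereal" where
  "ucheck s \<gamma> = (if \<gamma> = 0 then \<infinity> else ereal ((1 / \<gamma>) * ((s + \<gamma>) / 2)^2))"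

definition sigma :: "real \<Rightarrow> real \<Rightarrow> real \<Rightarrow> real" where
  "sigma s \<gamma> u = (1 + s / \<gamma>)^2 - 4 * u / \<gamma>"

definition ybar3 :: "real \<Rightarrow> real \<Rightarrow> real \<Rightarrow> real" where
  "ybar3 s \<gamma> u = (1 + s / \<gamma> + sqrt (sigma s \<gamma> u)) / 2"

text \<open>Finite rooted ordered trees; leaves carry a label of type 'a
  (unit for bare shapes, bool for typed leaves, True = type 1).
  Br2 l r: outdegree-2 vertex (rate s); Br3 l m r: outdegree-3 vertex (rate gamma);
  Mk c: vertex marked x with its single child (rate u).\<close>
datatype 'a asg = Lf 'a | Br2 "'a asg" "'a asg" | Br3 "'a asg" "'a asg" "'a asg" | Mk "'a asg"

text \<open>Law of the embedded ASG process a_r started from a single unmarked root: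
  asg_prob s gamma u T r = P(a_r = T), via the first-event decomposition at the root
  (holding time Exp(s+gamma+u); after the event the children evolve independently
  as copies of the process for the remaining time).\<close>
primrec asg_prob :: "real \<Rightarrow> real \<Rightarrow> real \<Rightarrow> 'a asg \<Rightarrow> real \<Rightarrow> real" where
  "asg_prob s \<gamma> u (Lf x) r = exp (- (s + \<gamma> + u) * r)"
| "asg_prob s \<gamma> u (Br2 a b) r =
     integral {0..r} (\<lambda>\<tau>. s * exp (- (s + \<gamma> + u) * \<tau>)
        * asg_prob s \<gamma> u a (r - \<tau>) * asg_prob s \<gamma> u b (r - \<tau>))"
| "asg_prob s \<gamma> u (Br3 a b c) r =
     integral {0..r} (\<lambda>\<tau>. \<gamma> * exp (- (s + \<gamma> + u) * \<tau>)
        * asg_prob s \<gamma> u a (r - \<tau>) * asg_prob s \<gamma> u b (r - \<tau>) * asg_prob s \<gamma> u c (r - \<tau>))"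
| "asg_prob s \<gamma> u (Mk a) r =
     integral {0..r} (\<lambda>\<tau>. u * exp (- (s + \<gamma> + u) * \<tau>) * asg_prob s \<gamma> u a (r - \<tau>))"

primrec vtype :: "bool asg \<Rightarrow> bool" where
  "vtype (Lf b) = b"
| "vtype (Br2 l r) = (vtype l \<and> vtype r)"
| "vtype (Br3 l m r) = (\<not> (\<not> vtype l \<or> (\<not> vtype m \<and> \<not> vtype r)))"
| "vtype (Mk c) = True"

primrec anc_type :: "bool asg \<Rightarrow> bool" where
  "anc_type (Lf b) = b"
| "anc_type (Br2 l r) = (if \<not> vtype r then anc_type r else anc_type l)"
| "anc_type (Br3 l m r) = (if \<not> vtype m \<and> \<not> vtype r then anc_type r else anc_type l)"
| "anc_type (Mk c) = anc_type c"

primrec leaves :: "'a asg \<Rightarrow> 'a list" where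
  "leaves (Lf x) = [x]"
| "leaves (Br2 l r) = leaves l @ leaves r"
| "leaves (Br3 l m r) = leaves l @ leaves m @ leaves r"
| "leaves (Mk c) = leaves c"

definition leaf_weight :: "real \<Rightarrow> bool asg \<Rightarrow> real" where
  "leaf_weight y0 T = prod_list (map (\<lambda>b. if b then y0 else 1 - y0) (leaves T))"

text \<open>g_r(y0) = P(ancestral leaf of the root of a_r has type 1).\<close>
definition asg_g :: "real \<Rightarrow> real \<Rightarrow> real \<Rightarrow> real \<Rightarrow> real \<Rightarrow> real" where
  "asg_g s \<gamma> u r y0 =
     infsum (\<lambda>T. asg_prob s \<gamma> u (map_asg (\<lambda>_. ()) T) r * leaf_weight y0 T) {T. anc_type T}"

end

theory Submission
  imports Defs
begin

lemma sub_reflect: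
  fixes g :: "real \<Rightarrow> real"
  shows "integral {0..r} (\<lambda>\<tau>. g (r - \<tau>)) = integral {0..r} g"
proof -
  have "integral {0..r} (\<lambda>\<tau>. g (r - \<tau>)) = integral {-r..0} (\<lambda>x. g (x + r))"
    using Henstock_Kurzweil_Integration.integral_reflect_real[of 0 "-r" "\<lambda>x. g (x + r)"] by (simp add: algebra_simps)
  also have "\<dots> = integral {0 - r..r - r} (\<lambda>x. g (x + r))" by simp
  also have "\<dots> = integral {0..r} g" by (rule integral_shift_real_ivl)
  finally show ?thesis .
qed

lemma sub_exp:
  fixes h :: "real \<Rightarrow> real"
  shows "integral {0..r} (\<lambda>\<tau>. exp (- c * \<tau>) * h (r - \<tau>)) =
         exp (- c * r) * integral {0..r} (\<lambda>\<sigma>. exp (c * \<sigma>) * h \<sigma>)"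
proof -
  have "(\<lambda>\<tau>. exp (- c * \<tau>) * h (r - \<tau>)) = (\<lambda>\<tau>. exp (- c * r) * (exp (c * (r - \<tau>)) * h (r - \<tau>)))"
    by (auto simp: fun_eq_iff exp_add[symmetric] algebra_simps)
  then show ?thesis using sub_reflect[where g="\<lambda>\<sigma>. exp (c * \<sigma>) * h \<sigma>" and r=r] by simp
qed

lemma cont_conv:
  fixes h :: "real \<Rightarrow> real"
  assumes "\<And>b. continuous_on {0..b} h"
  shows "continuous_on {0..b} (\<lambda>r. integral {0..r} (\<lambda>\<tau>. exp (- c * \<tau>) * h (r - \<tau>)))"
proof -
  have ci: "continuous_on {0..b} (\<lambda>r. integral {0..r} (\<lambda>\<sigma>. exp (c * \<sigma>) * h \<sigma>))"
    by (rule indefinite_integral_continuous_1, rule integrable_continuous_interval)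
       (intro continuous_intros assms)
  show ?thesis
    by (subst sub_exp) (intro continuous_intros ci)
qed


lemma int_nonneg':
  fixes f :: "real \<Rightarrow> real"
  assumes "\<And>x. x \<in> S \<Longrightarrow> 0 \<le> f x"
  shows "0 \<le> integral S f"
  using assms integral_nonneg not_integrable_integral by (metis order_refl)

definition stepH :: "bool asg set \<Rightarrow> bool asg set" where
  "stepH A = {Lf True, Lf False} \<union> (\<lambda>(a,b). Br2 a b) ` (A \<times> A)
      \<union> (\<lambda>(a,b,c). Br3 a b c) ` (A \<times> A \<times> A) \<union> Mk ` A"

lemma stepH_mono: "A \<subseteq> B \<Longrightarrow> stepH A \<subseteq> stepH B"
  unfolding stepH_def by (intro Un_mono image_mono Sigma_mono order_refl) auto

lemma finite_stepH: "finite A \<Longrightarrow> finite (stepH A)"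
  unfolding stepH_def by auto

fun Hs :: "nat \<Rightarrow> bool asg set" where
  "Hs 0 = {Lf True, Lf False}"
| "Hs (Suc n) = stepH (Hs n)"

lemma finite_Hs: "finite (Hs n)"
  by (induction n) (auto intro: finite_stepH)

lemma Hs_Suc_mono: "Hs n \<subseteq> Hs (Suc n)"
proof (induction n)
  case 0 then show ?case by (auto simp: stepH_def)
next
  case (Suc n)
  then show ?case by (simp only: Hs.simps stepH_mono)
qed

lemma Hs_mono: "m \<le> n \<Longrightarrow> Hs m \<subseteq> Hs n"
  using lift_Suc_mono_le[of Hs, OF Hs_Suc_mono] by blast

lemma Hs_cover: "\<exists>n. T \<in> Hs n"
proof (induction T)
  case (Lf x) then show ?case by (rule exI[of _ 0]) (cases x, auto)
next
  case (Br2 a b)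
  then obtain na nb where "a \<in> Hs na" "b \<in> Hs nb" by blast
  moreover have "Hs na \<subseteq> Hs (max na nb)" "Hs nb \<subseteq> Hs (max na nb)" by (simp_all add: Hs_mono)
  ultimately have "a \<in> Hs (max na nb)" "b \<in> Hs (max na nb)" by blast+
  then have "Br2 a b \<in> (\<lambda>(a,b). Br2 a b) ` (Hs (max na nb) \<times> Hs (max na nb))"
    by (intro image_eqI[where x="(a,b)"]) auto
  then show ?case by (intro exI[of _ "Suc (max na nb)"]) (simp only: Hs.simps stepH_def, blast)
next
  case (Br3 a b c)
  then obtain na nb nc where "a \<in> Hs na" "b \<in> Hs nb" "c \<in> Hs nc" by blast
  moreover have "Hs na \<subseteq> Hs (max na (max nb nc))" "Hs nb \<subseteq> Hs (max na (max nb nc))" "Hs nc \<subseteq> Hs (max na (max nb nc))"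
    by (simp_all add: Hs_mono)
  ultimately have "a \<in> Hs (max na (max nb nc))" "b \<in> Hs (max na (max nb nc))" "c \<in> Hs (max na (max nb nc))" by blast+
  then have "Br3 a b c \<in> (\<lambda>(a,b,c). Br3 a b c) ` (Hs (max na (max nb nc)) \<times> Hs (max na (max nb nc)) \<times> Hs (max na (max nb nc)))"
    by (intro image_eqI[where x="(a,b,c)"]) auto
  then show ?case by (intro exI[of _ "Suc (max na (max nb nc))"]) (simp only: Hs.simps stepH_def, blast)
next
  case (Mk a)
  then obtain na where "a \<in> Hs na" by blast
  then show ?case by (intro exI[of _ "Suc na"]) (simp only: Hs.simps stepH_def, blast)
qed

lemma finite_in_Hs: "finite F \<Longrightarrow> \<exists>n. F \<subseteq> Hs n"
proof (induction F rule: finite_induct)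
  case empty then show ?case by auto
next
  case (insert x F)
  then obtain n where n: "F \<subseteq> Hs n" by blast
  obtain m where m: "x \<in> Hs m" using Hs_cover by blast
  have "F \<subseteq> Hs (max n m)" using n Hs_mono[of n "max n m"] by auto
  moreover have "x \<in> Hs (max n m)" using m Hs_mono[of m "max n m"] by auto
  ultimately show ?case by blast
qed

lemma sum_B2:
  fixes f :: "bool asg \<Rightarrow> real"
  shows "sum f ((\<lambda>(a,b). Br2 a b) ` (A \<times> A)) = (\<Sum>a\<in>A. \<Sum>b\<in>A. f (Br2 a b))"
proof -
  have "inj_on (\<lambda>(a,b). Br2 a b) (A \<times> A)" by (auto simp: inj_on_def)
  then have "sum f ((\<lambda>(a,b). Br2 a b) ` (A \<times> A)) = sum (f \<circ> (\<lambda>(a,b). Br2 a b)) (A \<times> A)"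
    by (rule sum.reindex)
  also have "\<dots> = (\<Sum>(a,b)\<in>A \<times> A. f (Br2 a b))"
    by (rule sum.cong) auto
  also have "\<dots> = (\<Sum>a\<in>A. \<Sum>b\<in>A. f (Br2 a b))"
    by (rule sum.cartesian_product[symmetric])
  finally show ?thesis .
qed

lemma sum_B3:
  fixes f :: "bool asg \<Rightarrow> real"
  shows "sum f ((\<lambda>(a,b,c). Br3 a b c) ` (A \<times> A \<times> A)) = (\<Sum>a\<in>A. \<Sum>b\<in>A. \<Sum>c\<in>A. f (Br3 a b c))"
proof -
  have "inj_on (\<lambda>(a,b,c). Br3 a b c) (A \<times> A \<times> A)" by (auto simp: inj_on_def)
  then have "sum f ((\<lambda>(a,b,c). Br3 a b c) ` (A \<times> A \<times> A)) = sum (f \<circ> (\<lambda>(a,b,c). Br3 a b c)) (A \<times> A \<times> A)"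
    by (rule sum.reindex)
  also have "\<dots> = (\<Sum>(a,bc)\<in>A \<times> (A \<times> A). f (Br3 a (fst bc) (snd bc)))"
    by (rule sum.cong) auto
  also have "\<dots> = (\<Sum>a\<in>A. \<Sum>bc\<in>A \<times> A. f (Br3 a (fst bc) (snd bc)))"
    by (rule sum.cartesian_product[symmetric])
  also have "\<dots> = (\<Sum>a\<in>A. \<Sum>b\<in>A. \<Sum>c\<in>A. f (Br3 a b c))"
  proof (rule sum.cong[OF refl])
    fix a show "(\<Sum>bc\<in>A \<times> A. f (Br3 a (fst bc) (snd bc))) = (\<Sum>b\<in>A. \<Sum>c\<in>A. f (Br3 a b c))"
      using sum.cartesian_product[of "\<lambda>b c. f (Br3 a b c)" A A] by (simp add: case_prod_beta)
  qed
  finally show ?thesis .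
qed

lemma sum_BM:
  fixes f :: "bool asg \<Rightarrow> real"
  shows "sum f (Mk ` A) = (\<Sum>a\<in>A. f (Mk a))"
  by (subst sum.reindex) (auto simp: inj_on_def)

lemma sum_Hs_Suc:
  fixes f :: "bool asg \<Rightarrow> real"
  shows "(\<Sum>T\<in>Hs (Suc n). f T) = f (Lf True) + f (Lf False)
     + (\<Sum>a\<in>Hs n. \<Sum>b\<in>Hs n. f (Br2 a b))
     + (\<Sum>a\<in>Hs n. \<Sum>b\<in>Hs n. \<Sum>c\<in>Hs n. f (Br3 a b c))
     + (\<Sum>a\<in>Hs n. f (Mk a))"
proof -
  have fin: "finite (Hs n)" by (rule finite_Hs)
  let ?L = "{Lf True, Lf False}"
  let ?B2 = "(\<lambda>(a,b). Br2 a b) ` (Hs n \<times> Hs n)"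
  let ?B3 = "(\<lambda>(a,b,c). Br3 a b c) ` (Hs n \<times> Hs n \<times> Hs n)"
  let ?BM = "Mk ` Hs n"
  have f2: "finite ?B2" "finite ?B3" "finite ?BM" using fin by auto
  have d1: "?L \<inter> ?B2 = {}" by auto
  have d2: "(?L \<union> ?B2) \<inter> ?B3 = {}" by auto
  have d3: "(?L \<union> ?B2 \<union> ?B3) \<inter> ?BM = {}" by auto
  have "(\<Sum>T\<in>Hs (Suc n). f T) = sum f (?L \<union> ?B2 \<union> ?B3 \<union> ?BM)" by (simp only: Hs.simps stepH_def)
  also have "\<dots> = sum f ?L + sum f ?B2 + sum f ?B3 + sum f ?BM"
    using f2 d1 d2 d3 by (simp add: sum.union_disjoint)
  also have "sum f ?L = f (Lf True) + f (Lf False)" by simp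
  finally show ?thesis by (simp only: sum_B2 sum_B3 sum_BM)
qed


lemma vtype_of_anc: "anc_type T \<Longrightarrow> vtype T"
  by (induction T) (auto split: if_splits)

lemma leaf_weight_simps[simp]:
  "leaf_weight y (Lf x) = (if x then y else 1 - y)"
  "leaf_weight y (Br2 a b) = leaf_weight y a * leaf_weight y b"
  "leaf_weight y (Br3 a b c) = leaf_weight y a * leaf_weight y b * leaf_weight y c"
  "leaf_weight y (Mk a) = leaf_weight y a"
  by (simp_all add: leaf_weight_def)

lemma leaf_weight_nonneg: "0 \<le> y \<Longrightarrow> y \<le> 1 \<Longrightarrow> 0 \<le> leaf_weight y T"
  by (induction T) auto

locale asgp =
  fixes s g u :: real
  assumes s_pos: "0 < s" and g_nn: "0 \<le> g" and u_pos: "0 < u"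
begin

definition lam where "lam = s + g + u"

definition P :: "bool asg \<Rightarrow> real \<Rightarrow> real" where
  "P T r = asg_prob s g u (map_asg (\<lambda>_. ()) T) r"

lemma P_simps:
  "P (Lf x) r = exp (- lam * r)"
  "P (Br2 a b) r = integral {0..r} (\<lambda>\<tau>. exp (- lam * \<tau>) * (s * P a (r - \<tau>) * P b (r - \<tau>)))"
  "P (Br3 a b c) r = integral {0..r} (\<lambda>\<tau>. exp (- lam * \<tau>) * (g * P a (r - \<tau>) * P b (r - \<tau>) * P c (r - \<tau>)))"
  "P (Mk a) r = integral {0..r} (\<lambda>\<tau>. exp (- lam * \<tau>) * (u * P a (r - \<tau>)))"
  by (simp_all add: P_def lam_def mult_ac)

lemma P_cont: "continuous_on {0..b} (P T)"
proof (induction T arbitrary: b)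
  case (Lf x)
  have "P (Lf x) = (\<lambda>r. exp (- lam * r))" by (simp add: fun_eq_iff P_simps)
  then show ?case by (simp add: continuous_intros)
next
  case (Br2 a c)
  have e: "P (Br2 a c) = (\<lambda>r. integral {0..r} (\<lambda>\<tau>. exp (- lam * \<tau>) * (\<lambda>t. s * P a t * P c t) (r - \<tau>)))"
    by (simp add: fun_eq_iff P_simps)
  show ?case unfolding e
    by (rule cont_conv) (intro continuous_intros Br2.IH)
next
  case (Br3 a c d)
  have e: "P (Br3 a c d) = (\<lambda>r. integral {0..r} (\<lambda>\<tau>. exp (- lam * \<tau>) * (\<lambda>t. g * P a t * P c t * P d t) (r - \<tau>)))"
    by (simp add: fun_eq_iff P_simps)
  show ?case unfolding e
    by (rule cont_conv) (intro continuous_intros Br3.IH)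
next
  case (Mk a)
  have e: "P (Mk a) = (\<lambda>r. integral {0..r} (\<lambda>\<tau>. exp (- lam * \<tau>) * (\<lambda>t. u * P a t) (r - \<tau>)))"
    by (simp add: fun_eq_iff P_simps)
  show ?case unfolding e
    by (rule cont_conv) (intro continuous_intros Mk.IH)
qed

lemma P_nonneg:
  shows "0 \<le> r \<Longrightarrow> 0 \<le> P T r"
proof (induction T arbitrary: r)
  case (Lf x) then show ?case by (simp add: P_simps)
next
  case (Br2 a c)
  show ?case unfolding P_simps
  proof (rule int_nonneg')
    fix x assume "x \<in> {0..r}"
    then have "0 \<le> P a (r - x)" "0 \<le> P c (r - x)" using Br2.IH by auto
    then show "0 \<le> exp (- lam * x) * (s * P a (r - x) * P c (r - x))" using s_pos by simp
  qed
next
  case (Br3 a c d)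
  show ?case unfolding P_simps
  proof (rule int_nonneg')
    fix x assume "x \<in> {0..r}"
    then have "0 \<le> P a (r - x)" "0 \<le> P c (r - x)" "0 \<le> P d (r - x)" using Br3.IH by auto
    then show "0 \<le> exp (- lam * x) * (g * P a (r - x) * P c (r - x) * P d (r - x))" using g_nn by simp
  qed
next
  case (Mk a)
  show ?case unfolding P_simps
  proof (rule int_nonneg')
    fix x assume "x \<in> {0..r}"
    then have "0 \<le> P a (r - x)" using Mk.IH by auto
    then show "0 \<le> exp (- lam * x) * (u * P a (r - x))" using u_pos by simp
  qed
qed

definition W :: "real \<Rightarrow> bool asg \<Rightarrow> real \<Rightarrow> real" where
  "W y T r = P T r * leaf_weight y T"

primrec Q :: "real \<Rightarrow> bool asg \<Rightarrow> real \<Rightarrow> real" where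
  "Q y (Lf x) t = 0"
| "Q y (Br2 a b) t = s * (W y a t * W y b t)"
| "Q y (Br3 a b c) t = g * (W y a t * W y b t * W y c t)"
| "Q y (Mk a) t = u * W y a t"

lemma W_cont: "continuous_on {0..b} (W y T)"
proof -
  have "W y T = (\<lambda>r. P T r * leaf_weight y T)" by (simp add: fun_eq_iff W_def)
  then show ?thesis by (simp add: continuous_intros P_cont)
qed

lemma Q_cont: "continuous_on {0..b} (Q y T)"
proof (cases T)
  case (Lf x)
  then have "Q y T = (\<lambda>t. 0)" by (simp add: fun_eq_iff)
  then show ?thesis by simp
next
  case (Br2 a c)
  then have "Q y T = (\<lambda>t. s * (W y a t * W y c t))" by (simp add: fun_eq_iff)
  then show ?thesis by (simp add: continuous_intros W_cont)
next
  case (Br3 a c d)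
  then have "Q y T = (\<lambda>t. g * (W y a t * W y c t * W y d t))" by (simp add: fun_eq_iff)
  then show ?thesis by (simp add: continuous_intros W_cont)
next
  case (Mk a)
  then have "Q y T = (\<lambda>t. u * W y a t)" by (simp add: fun_eq_iff)
  then show ?thesis by (simp add: continuous_intros W_cont)
qed

lemma W_nonneg: "0 \<le> y \<Longrightarrow> y \<le> 1 \<Longrightarrow> 0 \<le> r \<Longrightarrow> 0 \<le> W y T r"
  unfolding W_def by (intro mult_nonneg_nonneg P_nonneg leaf_weight_nonneg)

lemma W_Lf: "W y (Lf x) r = exp (- lam * r) * (if x then y else 1 - y)"
  by (simp add: W_def P_simps)

lemma W_rec:
  assumes "\<forall>x. T \<noteq> Lf x"
  shows "W y T r = integral {0..r} (\<lambda>\<tau>. exp (- lam * \<tau>) * Q y T (r - \<tau>))"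
proof (cases T)
  case (Lf x) then show ?thesis using assms by auto
next
  case (Br2 a c)
  have "(\<lambda>\<tau>. exp (- lam * \<tau>) * Q y T (r - \<tau>)) =
     (\<lambda>\<tau>. exp (- lam * \<tau>) * (s * P a (r - \<tau>) * P c (r - \<tau>)) * (leaf_weight y a * leaf_weight y c))"
    using Br2 by (simp add: fun_eq_iff W_def mult_ac)
  then show ?thesis using Br2 by (simp add: W_def P_simps)
next
  case (Br3 a c d)
  have "(\<lambda>\<tau>. exp (- lam * \<tau>) * Q y T (r - \<tau>)) =
     (\<lambda>\<tau>. exp (- lam * \<tau>) * (g * P a (r - \<tau>) * P c (r - \<tau>) * P d (r - \<tau>)) * (leaf_weight y a * leaf_weight y c * leaf_weight y d))"
    using Br3 by (simp add: fun_eq_iff W_def mult_ac)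
  then show ?thesis using Br3 by (simp add: W_def P_simps)
next
  case (Mk a)
  have "(\<lambda>\<tau>. exp (- lam * \<tau>) * Q y T (r - \<tau>)) =
     (\<lambda>\<tau>. exp (- lam * \<tau>) * (u * P a (r - \<tau>)) * leaf_weight y a)"
    using Mk by (simp add: fun_eq_iff W_def mult_ac)
  then show ?thesis using Mk by (simp add: W_def P_simps)
qed

lemma cont_refl:
  fixes h :: "real \<Rightarrow> real" and r :: real
  assumes "\<And>b. continuous_on {0..b} h"
  shows "continuous_on {0..r} (\<lambda>\<tau>. h (r - \<tau>))"
proof (rule continuous_on_compose2[OF assms[of r]])
  show "continuous_on {0..r} (\<lambda>\<tau>. r - \<tau>)" by (rule continuous_on_op_minus)
  show "(\<lambda>\<tau>. r - \<tau>) ` {0..r} \<subseteq> {0..r}" by auto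
qed

lemma sum_int:
  assumes fin: "finite S" and nl: "\<forall>T\<in>S. \<forall>x. T \<noteq> Lf x"
  shows "(\<Sum>T\<in>S. c T * W y T r) = integral {0..r} (\<lambda>\<tau>. exp (- lam * \<tau>) * (\<Sum>T\<in>S. c T * Q y T (r - \<tau>)))"
proof -
  have "(\<lambda>\<tau>. exp (- lam * \<tau>) * (\<Sum>T\<in>S. c T * Q y T (r - \<tau>))) =
        (\<lambda>\<tau>. \<Sum>T\<in>S. c T * (exp (- lam * \<tau>) * Q y T (r - \<tau>)))"
    by (simp add: fun_eq_iff sum_distrib_left mult_ac)
  then have "integral {0..r} (\<lambda>\<tau>. exp (- lam * \<tau>) * (\<Sum>T\<in>S. c T * Q y T (r - \<tau>))) =
       (\<Sum>T\<in>S. integral {0..r} (\<lambda>\<tau>. c T * (exp (- lam * \<tau>) * Q y T (r - \<tau>))))"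
    by (simp only:) (rule integral_sum[OF fin], rule integrable_continuous_interval,
        intro continuous_intros cont_refl Q_cont)
  also have "\<dots> = (\<Sum>T\<in>S. c T * W y T r)"
    using nl by (intro sum.cong refl) (simp add: W_rec)
  finally show ?thesis by simp
qed

definition Sm :: "real \<Rightarrow> (bool asg \<Rightarrow> bool) \<Rightarrow> nat \<Rightarrow> real \<Rightarrow> real" where
  "Sm y \<phi> n r = (\<Sum>T\<in>Hs n. of_bool (\<phi> T) * W y T r)"

lemma Sm_Suc:
  "Sm y \<phi> (Suc n) r = exp (- lam * r) * (of_bool (\<phi> (Lf True)) * y + of_bool (\<phi> (Lf False)) * (1 - y))
     + integral {0..r} (\<lambda>\<tau>. exp (- lam * \<tau>) * (\<Sum>T\<in>Hs (Suc n). of_bool (\<phi> T) * Q y T (r - \<tau>)))"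
proof -
  let ?L = "{Lf True, Lf False}"
  let ?N = "Hs (Suc n) - ?L"
  have sub: "?L \<subseteq> Hs (Suc n)" by (simp add: stepH_def)
  have fin: "finite (Hs (Suc n))" by (rule finite_Hs)
  have nl: "\<forall>T\<in>?N. \<forall>x. T \<noteq> Lf x"
  proof (intro ballI allI notI)
    fix T x assume "T \<in> ?N" "T = Lf x" then show False by (cases x) auto
  qed
  have e1: "Sm y \<phi> (Suc n) r = (\<Sum>T\<in>?N. of_bool (\<phi> T) * W y T r) + (\<Sum>T\<in>?L. of_bool (\<phi> T) * W y T r)"
    unfolding Sm_def by (rule sum.subset_diff[OF sub fin])
  have e2: "(\<Sum>T\<in>?L. of_bool (\<phi> T) * W y T r) = exp (- lam * r) * (of_bool (\<phi> (Lf True)) * y + of_bool (\<phi> (Lf False)) * (1 - y))"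
    by (simp add: W_Lf algebra_simps)
  have e3: "(\<Sum>T\<in>?N. of_bool (\<phi> T) * W y T r) = integral {0..r} (\<lambda>\<tau>. exp (- lam * \<tau>) * (\<Sum>T\<in>?N. of_bool (\<phi> T) * Q y T (r - \<tau>)))"
    by (rule sum_int[OF finite_Diff[OF fin] nl])
  have e4: "(\<Sum>T\<in>?N. of_bool (\<phi> T) * Q y T t) = (\<Sum>T\<in>Hs (Suc n). of_bool (\<phi> T) * Q y T t)" for t
  proof -
    have "(\<Sum>T\<in>Hs (Suc n). of_bool (\<phi> T) * Q y T t) = (\<Sum>T\<in>?N. of_bool (\<phi> T) * Q y T t) + (\<Sum>T\<in>?L. of_bool (\<phi> T) * Q y T t)"
      by (rule sum.subset_diff[OF sub fin])
    moreover have "(\<Sum>T\<in>?L. of_bool (\<phi> T) * Q y T t) = 0" by (intro sum.neutral) auto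
    ultimately show ?thesis by simp
  qed
  show ?thesis unfolding e1 e2 e3 e4 by simp
qed

end


lemma sum2: "(\<Sum>a\<in>A. \<Sum>b\<in>A. (f a::real) * h b) = sum f A * sum h A"
  by (simp add: sum_product)

lemma sum3: "(\<Sum>a\<in>A. \<Sum>b\<in>A. \<Sum>c\<in>A. (f a::real) * (h b * k c)) = sum f A * (sum h A * sum k A)"
proof -
  have "(\<Sum>a\<in>A. \<Sum>b\<in>A. \<Sum>c\<in>A. f a * (h b * k c)) = (\<Sum>a\<in>A. f a * (\<Sum>b\<in>A. \<Sum>c\<in>A. h b * k c))"
    by (simp add: sum_distrib_left)
  also have "\<dots> = (\<Sum>a\<in>A. f a * (sum h A * sum k A))" by (simp add: sum_product)
  also have "\<dots> = sum f A * (sum h A * sum k A)" by (simp add: sum_distrib_right)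
  finally show ?thesis .
qed

lemma ob3: "(of_bool (va \<and> (vb \<or> vc)) :: real) = of_bool va * (1 - of_bool (\<not> vb) * of_bool (\<not> vc))"
  by (cases va; cases vb; cases vc) auto

context asgp
begin

definition "Mn y n t = Sm y (\<lambda>_. True) n t"
definition "Vn y n t = Sm y vtype n t"
definition "Nn y n t = Sm y (\<lambda>T. \<not> vtype T) n t"
definition "An y n t = Sm y anc_type n t"

lemma Nn_eq: "Nn y n t = Mn y n t - Vn y n t"
proof -
  have "Nn y n t = (\<Sum>T\<in>Hs n. W y T t - of_bool (vtype T) * W y T t)"
    unfolding Nn_def Sm_def by (intro sum.cong refl) (simp add: algebra_simps)
  also have "\<dots> = Mn y n t - Vn y n t"
    unfolding Mn_def Vn_def Sm_def by (simp add: sum_subtractf)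
  finally show ?thesis .
qed

lemma sumW: "(\<Sum>a\<in>Hs n. c * (of_bool (\<phi> a) * W y a t)) = c * Sm y \<phi> n t"
  unfolding Sm_def by (simp add: sum_distrib_left)

lemma sumW1: "(\<Sum>a\<in>Hs n. of_bool (\<phi> a) * W y a t) = Sm y \<phi> n t"
  unfolding Sm_def by simp

lemma orsum: "(\<Sum>b\<in>Hs n. \<Sum>c\<in>Hs n. of_bool (vtype b \<or> vtype c) * (W y b t * W y c t))
   = (Mn y n t)^2 - (Nn y n t)^2"
proof -
  have "(\<Sum>b\<in>Hs n. \<Sum>c\<in>Hs n. of_bool (vtype b \<or> vtype c) * (W y b t * W y c t))
      = (\<Sum>b\<in>Hs n. \<Sum>c\<in>Hs n. W y b t * W y c t - (of_bool (\<not> vtype b) * W y b t) * (of_bool (\<not> vtype c) * W y c t))"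
    by (intro sum.cong refl) (auto simp: algebra_simps)
  also have "\<dots> = (\<Sum>b\<in>Hs n. \<Sum>c\<in>Hs n. W y b t * W y c t) - (\<Sum>b\<in>Hs n. \<Sum>c\<in>Hs n. (of_bool (\<not> vtype b) * W y b t) * (of_bool (\<not> vtype c) * W y c t))"
    by (simp add: sum_subtractf)
  also have "\<dots> = (Mn y n t)^2 - (Nn y n t)^2"
    unfolding sum2 Mn_def Nn_def Sm_def by (simp add: power2_eq_square)
  finally show ?thesis .
qed

lemma QM: "(\<Sum>T\<in>Hs (Suc n). of_bool True * Q y T t)
   = s * (Mn y n t)^2 + g * (Mn y n t)^3 + u * Mn y n t"
proof -
  have b2: "(\<Sum>a\<in>Hs n. \<Sum>b\<in>Hs n. of_bool True * Q y (Br2 a b) t) = s * (Mn y n t)^2"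
  proof -
    have "(\<Sum>a\<in>Hs n. \<Sum>b\<in>Hs n. of_bool True * Q y (Br2 a b) t) = (\<Sum>a\<in>Hs n. \<Sum>b\<in>Hs n. (s * (of_bool True * W y a t)) * (of_bool True * W y b t))"
      by (intro sum.cong refl) (simp add: algebra_simps)
    also have "\<dots> = (\<Sum>a\<in>Hs n. s * (of_bool True * W y a t)) * (\<Sum>b\<in>Hs n. of_bool True * W y b t)" by (rule sum2)
    finally show ?thesis by (simp only: sum_distrib_left[symmetric]) (simp add: Mn_def Sm_def power2_eq_square)
  qed
  have b3: "(\<Sum>a\<in>Hs n. \<Sum>b\<in>Hs n. \<Sum>c\<in>Hs n. of_bool True * Q y (Br3 a b c) t) = g * (Mn y n t)^3"
  proof -
    have "(\<Sum>a\<in>Hs n. \<Sum>b\<in>Hs n. \<Sum>c\<in>Hs n. of_bool True * Q y (Br3 a b c) t) = (\<Sum>a\<in>Hs n. \<Sum>b\<in>Hs n. \<Sum>c\<in>Hs n. (g * (of_bool True * W y a t)) * ((of_bool True * W y b t) * (of_bool True * W y c t)))"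
      by (intro sum.cong refl) (simp add: algebra_simps)
    also have "\<dots> = (\<Sum>a\<in>Hs n. g * (of_bool True * W y a t)) * ((\<Sum>b\<in>Hs n. of_bool True * W y b t) * (\<Sum>c\<in>Hs n. of_bool True * W y c t))" by (rule sum3)
    finally show ?thesis by (simp only: sum_distrib_left[symmetric]) (simp add: Mn_def Sm_def power3_eq_cube)
  qed
  have bm: "(\<Sum>a\<in>Hs n. of_bool True * Q y (Mk a) t) = u * Mn y n t"
  proof -
    have "(\<Sum>a\<in>Hs n. of_bool True * Q y (Mk a) t) = (\<Sum>a\<in>Hs n. u * (of_bool True * W y a t))"
      by (intro sum.cong refl) (simp add: algebra_simps)
    then show ?thesis by (simp only: sum_distrib_left[symmetric]) (simp add: Mn_def Sm_def)
  qed
  show ?thesis unfolding sum_Hs_Suc[where f="\<lambda>T. of_bool True * Q y T t"] b2 b3 bm by simp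
qed

lemma QV: "(\<Sum>T\<in>Hs (Suc n). of_bool (vtype T) * Q y T t)
   = s * (Vn y n t)^2 + g * Vn y n t * ((Mn y n t)^2 - (Nn y n t)^2) + u * Mn y n t"
proof -
  have b2: "(\<Sum>a\<in>Hs n. \<Sum>b\<in>Hs n. of_bool (vtype (Br2 a b)) * Q y (Br2 a b) t) = s * (Vn y n t)^2"
  proof -
    have "(\<Sum>a\<in>Hs n. \<Sum>b\<in>Hs n. of_bool (vtype (Br2 a b)) * Q y (Br2 a b) t) = (\<Sum>a\<in>Hs n. \<Sum>b\<in>Hs n. (s * (of_bool (vtype a) * W y a t)) * (of_bool (vtype b) * W y b t))"
      by (intro sum.cong refl) (simp add: algebra_simps)
    also have "\<dots> = (\<Sum>a\<in>Hs n. s * (of_bool (vtype a) * W y a t)) * (\<Sum>b\<in>Hs n. of_bool (vtype b) * W y b t)" by (rule sum2)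
    finally show ?thesis by (simp only: sum_distrib_left[symmetric]) (simp add: Vn_def Sm_def power2_eq_square)
  qed
  have b3: "(\<Sum>a\<in>Hs n. \<Sum>b\<in>Hs n. \<Sum>c\<in>Hs n. of_bool (vtype (Br3 a b c)) * Q y (Br3 a b c) t) = g * Vn y n t * ((Mn y n t)^2 - (Nn y n t)^2)"
  proof -
    have "(\<Sum>a\<in>Hs n. \<Sum>b\<in>Hs n. \<Sum>c\<in>Hs n. of_bool (vtype (Br3 a b c)) * Q y (Br3 a b c) t) = (\<Sum>a\<in>Hs n. (g * (of_bool (vtype a) * W y a t)) * (\<Sum>b\<in>Hs n. \<Sum>c\<in>Hs n. of_bool (vtype b \<or> vtype c) * (W y b t * W y c t)))"
      by (simp add: sum_distrib_left sum_distrib_right, intro sum.cong refl) (auto simp: algebra_simps)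
    also have "\<dots> = (\<Sum>a\<in>Hs n. g * (of_bool (vtype a) * W y a t)) * ((Mn y n t)^2 - (Nn y n t)^2)"
      unfolding orsum by (rule sum_distrib_right[symmetric])
    finally show ?thesis by (simp only: sum_distrib_left[symmetric]) (simp add: Vn_def Sm_def)
  qed
  have bm: "(\<Sum>a\<in>Hs n. of_bool (vtype (Mk a)) * Q y (Mk a) t) = u * Mn y n t"
  proof -
    have "(\<Sum>a\<in>Hs n. of_bool (vtype (Mk a)) * Q y (Mk a) t) = (\<Sum>a\<in>Hs n. u * (of_bool True * W y a t))"
      by (intro sum.cong refl) (simp add: algebra_simps)
    then show ?thesis by (simp only: sum_distrib_left[symmetric]) (simp add: Mn_def Sm_def)
  qed
  show ?thesis unfolding sum_Hs_Suc[where f="\<lambda>T. of_bool (vtype T) * Q y T t"] b2 b3 bm by simp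
qed

lemma QA: "(\<Sum>T\<in>Hs (Suc n). of_bool (anc_type T) * Q y T t)
   = s * An y n t * Vn y n t + g * An y n t * ((Mn y n t)^2 - (Nn y n t)^2) + u * An y n t"
proof -
  have c2: "anc_type (Br2 a b) = (anc_type a \<and> vtype b)" for a b
    using vtype_of_anc[of b] by auto
  have c3: "anc_type (Br3 a b c) = (anc_type a \<and> (vtype b \<or> vtype c))" for a b c
    using vtype_of_anc[of c] by auto
  have b2: "(\<Sum>a\<in>Hs n. \<Sum>b\<in>Hs n. of_bool (anc_type (Br2 a b)) * Q y (Br2 a b) t) = s * An y n t * Vn y n t"
  proof -
    have "(\<Sum>a\<in>Hs n. \<Sum>b\<in>Hs n. of_bool (anc_type (Br2 a b)) * Q y (Br2 a b) t) = (\<Sum>a\<in>Hs n. \<Sum>b\<in>Hs n. (s * (of_bool (anc_type a) * W y a t)) * (of_bool (vtype b) * W y b t))"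
      unfolding c2 by (intro sum.cong refl) (simp add: algebra_simps)
    also have "\<dots> = (\<Sum>a\<in>Hs n. s * (of_bool (anc_type a) * W y a t)) * (\<Sum>b\<in>Hs n. of_bool (vtype b) * W y b t)" by (rule sum2)
    finally show ?thesis by (simp only: sum_distrib_left[symmetric]) (simp add: An_def Vn_def Sm_def)
  qed
  have b3: "(\<Sum>a\<in>Hs n. \<Sum>b\<in>Hs n. \<Sum>c\<in>Hs n. of_bool (anc_type (Br3 a b c)) * Q y (Br3 a b c) t) = g * An y n t * ((Mn y n t)^2 - (Nn y n t)^2)"
  proof -
    have "(\<Sum>a\<in>Hs n. \<Sum>b\<in>Hs n. \<Sum>c\<in>Hs n. of_bool (anc_type (Br3 a b c)) * Q y (Br3 a b c) t) = (\<Sum>a\<in>Hs n. (g * (of_bool (anc_type a) * W y a t)) * (\<Sum>b\<in>Hs n. \<Sum>c\<in>Hs n. of_bool (vtype b \<or> vtype c) * (W y b t * W y c t)))"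
      unfolding c3 by (simp add: sum_distrib_left sum_distrib_right, intro sum.cong refl) (auto simp: algebra_simps)
    also have "\<dots> = (\<Sum>a\<in>Hs n. g * (of_bool (anc_type a) * W y a t)) * ((Mn y n t)^2 - (Nn y n t)^2)"
      unfolding orsum by (rule sum_distrib_right[symmetric])
    finally show ?thesis by (simp only: sum_distrib_left[symmetric]) (simp add: An_def Sm_def)
  qed
  have bm: "(\<Sum>a\<in>Hs n. of_bool (anc_type (Mk a)) * Q y (Mk a) t) = u * An y n t"
  proof -
    have "(\<Sum>a\<in>Hs n. of_bool (anc_type (Mk a)) * Q y (Mk a) t) = (\<Sum>a\<in>Hs n. u * (of_bool (anc_type a) * W y a t))"
      by (intro sum.cong refl) (simp add: algebra_simps)
    then show ?thesis by (simp only: sum_distrib_left[symmetric]) (simp add: An_def Sm_def)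
  qed
  show ?thesis unfolding sum_Hs_Suc[where f="\<lambda>T. of_bool (anc_type T) * Q y T t"] b2 b3 bm by simp
qed

end


context asgp
begin

lemma lam_pos: "0 < lam"
  using s_pos g_nn u_pos by (simp add: lam_def)

lemma int_exp:
  fixes c r :: real
  assumes c: "0 < c" and r: "0 \<le> r"
  shows "integral {0..r} (\<lambda>\<tau>. exp (- c * \<tau>)) = (1 - exp (- c * r)) / c"
proof -
  have "((\<lambda>\<tau>. exp (- c * \<tau>)) has_integral ((\<lambda>\<tau>. - exp (- c * \<tau>) / c) r - (\<lambda>\<tau>. - exp (- c * \<tau>) / c) 0)) {0..r}"
  proof (rule fundamental_theorem_of_calculus[OF r])
    fix x assume "x \<in> {0..r}"
    have "((\<lambda>\<tau>. - exp (- c * \<tau>) / c) has_real_derivative exp (- c * x)) (at x within {0..r})"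
      using c by (auto intro!: derivative_eq_intros simp: field_simps)
    then show "((\<lambda>\<tau>. - exp (- c * \<tau>) / c) has_vector_derivative exp (- c * x)) (at x within {0..r})"
      by (simp add: has_real_derivative_iff_has_vector_derivative)
  qed
  then have "integral {0..r} (\<lambda>\<tau>. exp (- c * \<tau>)) = (\<lambda>\<tau>. - exp (- c * \<tau>) / c) r - (\<lambda>\<tau>. - exp (- c * \<tau>) / c) 0"
    by (rule integral_unique)
  then show ?thesis using c by (simp add: field_simps)
qed

lemma int_pow:
  fixes C r :: real
  assumes r: "0 \<le> r"
  shows "integral {0..r} (\<lambda>\<tau>. C * (C * (r - \<tau>)) ^ n / fact n) = (C * r) ^ Suc n / fact (Suc n)"
proof -
  have "integral {0..r} (\<lambda>\<tau>. C * (C * (r - \<tau>)) ^ n / fact n) = integral {0..r} (\<lambda>\<sigma>. C * (C * \<sigma>) ^ n / fact n)"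
    using sub_reflect[where g="\<lambda>\<sigma>. C * (C * \<sigma>) ^ n / fact n" and r=r] by simp
  also have "\<dots> = (C * r) ^ Suc n / fact (Suc n)"
  proof -
    have "((\<lambda>\<sigma>. C * (C * \<sigma>) ^ n / fact n) has_integral ((\<lambda>\<sigma>. C ^ Suc n * \<sigma> ^ Suc n / fact (Suc n)) r - (\<lambda>\<sigma>. C ^ Suc n * \<sigma> ^ Suc n / fact (Suc n)) 0)) {0..r}"
    proof (rule fundamental_theorem_of_calculus[OF r])
      fix x assume "x \<in> {0..r}"
      have d: "((\<lambda>\<sigma>. \<sigma> ^ Suc n) has_real_derivative real (Suc n) * x ^ n) (at x within {0..r})"
        using DERIV_pow[of "Suc n" x] has_field_derivative_at_within by simp
      have dd: "((\<lambda>\<sigma>. C ^ Suc n * \<sigma> ^ Suc n / fact (Suc n)) has_real_derivative C ^ Suc n * (real (Suc n) * x ^ n) / fact (Suc n)) (at x within {0..r})"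
        by (intro DERIV_cdivide DERIV_cmult d)
      have eq: "C ^ Suc n * (real (Suc n) * x ^ n) / fact (Suc n) = C * (C * x) ^ n / fact n"
        by (simp add: fact_Suc power_mult_distrib field_simps del: of_nat_Suc)
      have "((\<lambda>\<sigma>. C ^ Suc n * \<sigma> ^ Suc n / fact (Suc n)) has_real_derivative C * (C * x) ^ n / fact n) (at x within {0..r})"
        using dd unfolding eq .
      then show "((\<lambda>\<sigma>. C ^ Suc n * \<sigma> ^ Suc n / fact (Suc n)) has_vector_derivative C * (C * x) ^ n / fact n) (at x within {0..r})"
        unfolding has_real_derivative_iff_has_vector_derivative .
    qed
    then have "integral {0..r} (\<lambda>\<sigma>. C * (C * \<sigma>) ^ n / fact n) = (\<lambda>\<sigma>. C ^ Suc n * \<sigma> ^ Suc n / fact (Suc n)) r - (\<lambda>\<sigma>. C ^ Suc n * \<sigma> ^ Suc n / fact (Suc n)) 0"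
      by (rule integral_unique)
    then show ?thesis by (simp add: power_mult_distrib)
  qed
  finally show ?thesis .
qed

lemma Sm_cont: "continuous_on {0..b} (Sm y \<phi> n)"
proof -
  have "Sm y \<phi> n = (\<lambda>t. \<Sum>T\<in>Hs n. of_bool (\<phi> T) * W y T t)" by (simp add: fun_eq_iff Sm_def)
  then show ?thesis by (simp add: continuous_intros W_cont)
qed

lemma Sm_refl: "continuous_on {0..r} (\<lambda>\<tau>. Sm y \<phi> n (r - \<tau>))"
  by (rule cont_refl[OF Sm_cont])

lemma Sm_nonneg: "0 \<le> y \<Longrightarrow> y \<le> 1 \<Longrightarrow> 0 \<le> t \<Longrightarrow> 0 \<le> Sm y \<phi> n t"
  unfolding Sm_def by (intro sum_nonneg mult_nonneg_nonneg W_nonneg) auto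

lemma Sm_0: "Sm y \<phi> 0 t = exp (- lam * t) * (of_bool (\<phi> (Lf True)) * y + of_bool (\<phi> (Lf False)) * (1 - y))"
  by (simp add: Sm_def W_Lf algebra_simps)

lemma Mn_Suc: "Mn y (Suc n) t = exp (- lam * t) + integral {0..t} (\<lambda>\<tau>. exp (- lam * \<tau>) *
    (s * (Mn y n (t - \<tau>))^2 + g * (Mn y n (t - \<tau>))^3 + u * Mn y n (t - \<tau>)))"
proof -
  have "Mn y (Suc n) t = Sm y (\<lambda>_. True) (Suc n) t" by (simp add: Mn_def)
  also have "\<dots> = exp (- lam * t) * (of_bool True * y + of_bool True * (1 - y))
     + integral {0..t} (\<lambda>\<tau>. exp (- lam * \<tau>) * (\<Sum>T\<in>Hs (Suc n). of_bool True * Q y T (t - \<tau>)))"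
    by (rule Sm_Suc)
  also have "\<dots> = exp (- lam * t) + integral {0..t} (\<lambda>\<tau>. exp (- lam * \<tau>) *
    (s * (Mn y n (t - \<tau>))^2 + g * (Mn y n (t - \<tau>))^3 + u * Mn y n (t - \<tau>)))"
    by (simp only: QM) simp
  finally show ?thesis .
qed

lemma Vn_Suc: "Vn y (Suc n) t = exp (- lam * t) * y + integral {0..t} (\<lambda>\<tau>. exp (- lam * \<tau>) *
    (s * (Vn y n (t - \<tau>))^2 + g * Vn y n (t - \<tau>) * ((Mn y n (t - \<tau>))^2 - (Nn y n (t - \<tau>))^2) + u * Mn y n (t - \<tau>)))"
proof -
  have "Vn y (Suc n) t = Sm y vtype (Suc n) t" by (simp add: Vn_def)
  also have "\<dots> = exp (- lam * t) * (of_bool (vtype (Lf True)) * y + of_bool (vtype (Lf False)) * (1 - y))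
     + integral {0..t} (\<lambda>\<tau>. exp (- lam * \<tau>) * (\<Sum>T\<in>Hs (Suc n). of_bool (vtype T) * Q y T (t - \<tau>)))"
    by (rule Sm_Suc)
  also have "\<dots> = exp (- lam * t) * y + integral {0..t} (\<lambda>\<tau>. exp (- lam * \<tau>) *
    (s * (Vn y n (t - \<tau>))^2 + g * Vn y n (t - \<tau>) * ((Mn y n (t - \<tau>))^2 - (Nn y n (t - \<tau>))^2) + u * Mn y n (t - \<tau>)))"
    by (simp only: QV) simp
  finally show ?thesis .
qed

lemma An_Suc: "An y (Suc n) t = exp (- lam * t) * y + integral {0..t} (\<lambda>\<tau>. exp (- lam * \<tau>) *
    (s * An y n (t - \<tau>) * Vn y n (t - \<tau>) + g * An y n (t - \<tau>) * ((Mn y n (t - \<tau>))^2 - (Nn y n (t - \<tau>))^2) + u * An y n (t - \<tau>)))"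
proof -
  have "An y (Suc n) t = Sm y anc_type (Suc n) t" by (simp add: An_def)
  also have "\<dots> = exp (- lam * t) * (of_bool (anc_type (Lf True)) * y + of_bool (anc_type (Lf False)) * (1 - y))
     + integral {0..t} (\<lambda>\<tau>. exp (- lam * \<tau>) * (\<Sum>T\<in>Hs (Suc n). of_bool (anc_type T) * Q y T (t - \<tau>)))"
    by (rule Sm_Suc)
  also have "\<dots> = exp (- lam * t) * y + integral {0..t} (\<lambda>\<tau>. exp (- lam * \<tau>) *
    (s * An y n (t - \<tau>) * Vn y n (t - \<tau>) + g * An y n (t - \<tau>) * ((Mn y n (t - \<tau>))^2 - (Nn y n (t - \<tau>))^2) + u * An y n (t - \<tau>)))"
    by (simp only: QA) simp
  finally show ?thesis .
qed

lemma int_lam: "0 \<le> t \<Longrightarrow> integral {0..t} (\<lambda>\<tau>. exp (- lam * \<tau>) * lam) = 1 - exp (- lam * t)"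
  using int_exp[OF lam_pos, of t] lam_pos by simp

lemma Mn_le1:
  assumes y: "0 \<le> y" "y \<le> 1"
  shows "0 \<le> t \<Longrightarrow> Mn y n t \<le> 1"
proof (induction n arbitrary: t)
  case 0
  then show ?case using lam_pos by (simp add: Mn_def Sm_0)
next
  case (Suc n)
  let ?M = "\<lambda>\<tau>. Mn y n (t - \<tau>)"
  have cM: "continuous_on {0..t} ?M" unfolding Mn_def by (rule Sm_refl)
  have "integral {0..t} (\<lambda>\<tau>. exp (- lam * \<tau>) * (s * (?M \<tau>)^2 + g * (?M \<tau>)^3 + u * ?M \<tau>))
        \<le> integral {0..t} (\<lambda>\<tau>. exp (- lam * \<tau>) * lam)"
  proof (rule integral_le)
    show "(\<lambda>\<tau>. exp (- lam * \<tau>) * (s * (?M \<tau>)^2 + g * (?M \<tau>)^3 + u * ?M \<tau>)) integrable_on {0..t}"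
      by (rule integrable_continuous_interval) (intro continuous_intros cM)
    show "(\<lambda>\<tau>. exp (- lam * \<tau>) * lam) integrable_on {0..t}"
      by (rule integrable_continuous_interval) (intro continuous_intros)
    fix \<tau> assume "\<tau> \<in> {0..t}"
    then have h: "0 \<le> ?M \<tau>" "?M \<tau> \<le> 1" using Suc.IH[of "t - \<tau>"] Sm_nonneg[OF y] by (auto simp: Mn_def)
    have "s * (?M \<tau>)^2 \<le> s" using h s_pos by (intro mult_left_le power_le_one) auto
    moreover have "g * (?M \<tau>)^3 \<le> g" using h g_nn by (intro mult_left_le power_le_one) auto
    moreover have "u * ?M \<tau> \<le> u" using h u_pos by (intro mult_left_le) auto
    ultimately have "s * (?M \<tau>)^2 + g * (?M \<tau>)^3 + u * ?M \<tau> \<le> lam" by (simp add: lam_def)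
    then show "exp (- lam * \<tau>) * (s * (?M \<tau>)^2 + g * (?M \<tau>)^3 + u * ?M \<tau>) \<le> exp (- lam * \<tau>) * lam"
      by (intro mult_left_mono) auto
  qed
  then show ?case using int_lam[OF Suc.prems] by (simp add: Mn_Suc)
qed

end


context asgp
begin

definition "Cc = 2 * s + 3 * g + u"

lemma key_low:
  assumes M: "0 \<le> M" "M \<le> 1" and tau: "0 \<le> \<tau>"
  shows "exp (- lam * \<tau>) * (lam - (s * M^2 + g * M^3 + u * M)) \<le> Cc * (1 - M)"
proof -
  define K where "K = s * (1 + M) + g * (1 + M + M^2) + u"
  have eq: "lam - (s * M^2 + g * M^3 + u * M) = (1 - M) * K"
    by (simp add: K_def lam_def algebra_simps power2_eq_square power3_eq_cube)
  have M2: "M^2 \<le> 1" using M by (simp add: power_le_one)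
  have K0: "0 \<le> K" using M s_pos g_nn u_pos by (simp add: K_def)
  have KC: "K \<le> Cc"
  proof -
    have "s * (1 + M) \<le> s * 2" using M s_pos by (intro mult_left_mono) auto
    moreover have "g * (1 + M + M^2) \<le> g * 3" using M M2 g_nn by (intro mult_left_mono) auto
    ultimately show ?thesis by (simp add: K_def Cc_def)
  qed
  have e1: "exp (- lam * \<tau>) \<le> 1" using lam_pos tau by simp
  have "exp (- lam * \<tau>) * ((1 - M) * K) \<le> (1 - M) * K"
    using e1 K0 M by (intro mult_left_le_one_le) auto
  also have "\<dots> \<le> (1 - M) * Cc" using KC M by (intro mult_left_mono) auto
  also have "\<dots> = Cc * (1 - M)" by simp
  finally show ?thesis unfolding eq .
qed

lemma Cc_nn: "0 \<le> Cc" using s_pos g_nn u_pos by (simp add: Cc_def)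

lemma Mn_low:
  assumes y: "0 \<le> y" "y \<le> 1"
  shows "0 \<le> t \<Longrightarrow> 1 - Mn y n t \<le> (Cc * t) ^ n / fact n"
proof (induction n arbitrary: t)
  case 0
  then show ?case by (simp add: Mn_def Sm_0)
next
  case (Suc n)
  let ?M = "\<lambda>\<tau>. Mn y n (t - \<tau>)"
  have cM: "continuous_on {0..t} ?M" unfolding Mn_def by (rule Sm_refl)
  have i1: "(\<lambda>\<tau>. exp (- lam * \<tau>) * (s * (?M \<tau>)^2 + g * (?M \<tau>)^3 + u * ?M \<tau>)) integrable_on {0..t}"
    by (rule integrable_continuous_interval) (intro continuous_intros cM)
  have i2: "(\<lambda>\<tau>. exp (- lam * \<tau>) * lam) integrable_on {0..t}"
    by (rule integrable_continuous_interval) (intro continuous_intros)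
  have "1 - Mn y (Suc n) t = integral {0..t} (\<lambda>\<tau>. exp (- lam * \<tau>) * lam)
      - integral {0..t} (\<lambda>\<tau>. exp (- lam * \<tau>) * (s * (?M \<tau>)^2 + g * (?M \<tau>)^3 + u * ?M \<tau>))"
    using int_lam[OF Suc.prems] by (simp add: Mn_Suc)
  also have "\<dots> = integral {0..t} (\<lambda>\<tau>. exp (- lam * \<tau>) * (lam - (s * (?M \<tau>)^2 + g * (?M \<tau>)^3 + u * ?M \<tau>)))"
    using integral_diff[OF i2 i1] by (simp add: algebra_simps)
  also have "\<dots> \<le> integral {0..t} (\<lambda>\<tau>. Cc * (Cc * (t - \<tau>)) ^ n / fact n)"
  proof (rule integral_le)
    show "(\<lambda>\<tau>. exp (- lam * \<tau>) * (lam - (s * (?M \<tau>)^2 + g * (?M \<tau>)^3 + u * ?M \<tau>))) integrable_on {0..t}"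
      by (rule integrable_continuous_interval) (intro continuous_intros cM)
    show "(\<lambda>\<tau>. Cc * (Cc * (t - \<tau>)) ^ n / fact n) integrable_on {0..t}"
      by (rule integrable_continuous_interval) (intro continuous_intros, auto)
    fix \<tau> assume tau: "\<tau> \<in> {0..t}"
    then have h: "0 \<le> ?M \<tau>" "?M \<tau> \<le> 1" using Mn_le1[OF y, of "t - \<tau>" n] Sm_nonneg[OF y] by (auto simp: Mn_def)
    have "exp (- lam * \<tau>) * (lam - (s * (?M \<tau>)^2 + g * (?M \<tau>)^3 + u * ?M \<tau>)) \<le> Cc * (1 - ?M \<tau>)"
      using tau h by (intro key_low) auto
    also have "\<dots> \<le> Cc * ((Cc * (t - \<tau>)) ^ n / fact n)"
      using Suc.IH[of "t - \<tau>"] tau Cc_nn by (intro mult_left_mono) auto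
    finally show "exp (- lam * \<tau>) * (lam - (s * (?M \<tau>)^2 + g * (?M \<tau>)^3 + u * ?M \<tau>)) \<le> Cc * (Cc * (t - \<tau>)) ^ n / fact n"
      by simp
  qed
  also have "\<dots> = (Cc * t) ^ Suc n / fact (Suc n)" by (rule int_pow[OF Suc.prems])
  finally show ?case .
qed

end


lemma ineq_V2: 
  fixes V L :: real
  assumes "0 \<le> V" "V \<le> L" "L \<le> 1"
  shows "V^2 * (2 - V) \<le> L^2 * (2 - L)"
proof -
  have "L^2 * (2 - L) - V^2 * (2 - V) = (L - V) * (2 * (L + V) - (L^2 + L * V + V^2))"
    by (simp add: algebra_simps power2_eq_square)
  moreover have "L^2 + L * V + V^2 \<le> 2 * (L + V)"
  proof -
    have "L^2 \<le> L" using assms by (simp add: power2_eq_square mult_left_le_one_le)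
    moreover have "V^2 \<le> V" using assms by (simp add: power2_eq_square mult_left_le_one_le)
    moreover have "L * V \<le> L" using assms by (intro mult_left_le) auto
    ultimately show ?thesis using assms by simp
  qed
  ultimately have "0 \<le> L^2 * (2 - L) - V^2 * (2 - V)" using assms by simp
  then show ?thesis by simp
qed

lemma ineq_V1: 
  fixes V L :: real
  assumes "0 \<le> V" "V \<le> L" "L \<le> 1"
  shows "V * (2 - V) \<le> L * (2 - L)"
proof -
  have "L * (2 - L) - V * (2 - V) = (L - V) * (2 - L - V)" by (simp add: algebra_simps)
  moreover have "0 \<le> (L - V) * (2 - L - V)" using assms by simp
  ultimately show ?thesis by simp
qed

context asgp
begin

lemma drift_eq: "drift s g u L = - (lam * L - (s * L^2 + g * L^2 * (2 - L) + u))"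
  by (simp add: drift_def lam_def algebra_simps power2_eq_square)

lemma MN_facts:
  assumes y: "0 \<le> y" "y \<le> 1" and t: "0 \<le> t"
  shows "0 \<le> Vn y n t" "0 \<le> Nn y n t" "0 \<le> An y n t" "Mn y n t \<le> 1"
        "(Mn y n t)^2 - (Nn y n t)^2 = Vn y n t * (2 * Mn y n t - Vn y n t)"
proof -
  show "0 \<le> Vn y n t" "0 \<le> Nn y n t" "0 \<le> An y n t"
    using Sm_nonneg[OF y t] by (auto simp: Vn_def Nn_def An_def)
  show "Mn y n t \<le> 1" using Mn_le1[OF y t] .
  show "(Mn y n t)^2 - (Nn y n t)^2 = Vn y n t * (2 * Mn y n t - Vn y n t)"
    unfolding Nn_eq by (simp add: power2_eq_square algebra_simps)
qed

end

locale asgpL = asgp +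
  fixes L :: real
  assumes L0: "0 \<le> L" and L1: "L < 1" and Leq: "drift s g u L = 0"
begin

definition "cL = (1 - L) * (s + g * (1 - L))"

lemma lam_cL: "lam - cL = s * L + g * (L * (2 - L)) + u"
  by (simp add: cL_def lam_def algebra_simps)

lemma lam_cL_pos: "0 < lam - cL"
proof -
  have "0 \<le> s * L" using s_pos L0 by simp
  moreover have "0 \<le> g * (L * (2 - L))" using g_nn L0 L1 by simp
  ultimately show ?thesis unfolding lam_cL using u_pos by linarith
qed

lemma cL_pos: "0 < cL"
proof -
  have "0 < s + g * (1 - L)" using s_pos g_nn L1 by (simp add: add_pos_nonneg)
  then show ?thesis using L1 by (simp add: cL_def)
qed

lemma Leq': "s * L^2 + g * L^2 * (2 - L) + u = lam * L"
  using Leq drift_eq[of L] by simp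

lemma Vn_le: "0 \<le> t \<Longrightarrow> Vn L n t \<le> L"
proof (induction n arbitrary: t)
  case 0
  then show ?case using lam_pos L0 by (simp add: Vn_def Sm_0 mult_left_le_one_le)
next
  case (Suc n)
  have y: "0 \<le> L" "L \<le> 1" using L0 L1 by auto
  let ?M = "\<lambda>\<tau>. Mn L n (t - \<tau>)"
  let ?V = "\<lambda>\<tau>. Vn L n (t - \<tau>)"
  let ?N = "\<lambda>\<tau>. Nn L n (t - \<tau>)"
  have cM: "continuous_on {0..t} ?M" unfolding Mn_def by (rule Sm_refl)
  have cV: "continuous_on {0..t} ?V" unfolding Vn_def by (rule Sm_refl)
  have cN: "continuous_on {0..t} ?N" unfolding Nn_def by (rule Sm_refl)
  have "integral {0..t} (\<lambda>\<tau>. exp (- lam * \<tau>) * (s * (?V \<tau>)^2 + g * ?V \<tau> * ((?M \<tau>)^2 - (?N \<tau>)^2) + u * ?M \<tau>))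
        \<le> integral {0..t} (\<lambda>\<tau>. exp (- lam * \<tau>) * lam * L)"
  proof (rule integral_le)
    show "(\<lambda>\<tau>. exp (- lam * \<tau>) * (s * (?V \<tau>)^2 + g * ?V \<tau> * ((?M \<tau>)^2 - (?N \<tau>)^2) + u * ?M \<tau>)) integrable_on {0..t}"
      by (rule integrable_continuous_interval) (intro continuous_intros cM cV cN)
    show "(\<lambda>\<tau>. exp (- lam * \<tau>) * lam * L) integrable_on {0..t}"
      by (rule integrable_continuous_interval) (intro continuous_intros)
    fix \<tau> assume tau: "\<tau> \<in> {0..t}"
    then have tt: "0 \<le> t - \<tau>" by auto
    note F = MN_facts[OF y tt, of n]
    have VL: "?V \<tau> \<le> L" using Suc.IH[OF tt] .
    have MV: "?V \<tau> \<le> ?M \<tau>" using F Nn_eq[of L n "t - \<tau>"] by simp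
    have a1: "s * (?V \<tau>)^2 \<le> s * L^2"
      using F(1) VL s_pos by (intro mult_left_mono power_mono) auto
    have "?V \<tau> * ((?M \<tau>)^2 - (?N \<tau>)^2) = (?V \<tau>)^2 * (2 * ?M \<tau> - ?V \<tau>)"
      unfolding F(5) by (simp add: power2_eq_square mult.assoc)
    also have "\<dots> \<le> (?V \<tau>)^2 * (2 - ?V \<tau>)" using F(4) by (intro mult_left_mono) auto
    also have "\<dots> \<le> L^2 * (2 - L)" using F(1) VL y by (intro ineq_V2) auto
    finally have a2: "g * ?V \<tau> * ((?M \<tau>)^2 - (?N \<tau>)^2) \<le> g * L^2 * (2 - L)"
      using g_nn by (simp add: mult.assoc mult_left_mono)
    have a3: "u * ?M \<tau> \<le> u" using F(4) u_pos by simp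
    have "s * (?V \<tau>)^2 + g * ?V \<tau> * ((?M \<tau>)^2 - (?N \<tau>)^2) + u * ?M \<tau> \<le> lam * L"
      using a1 a2 a3 Leq' by linarith
    then show "exp (- lam * \<tau>) * (s * (?V \<tau>)^2 + g * ?V \<tau> * ((?M \<tau>)^2 - (?N \<tau>)^2) + u * ?M \<tau>) \<le> exp (- lam * \<tau>) * lam * L"
      by (simp add: mult.assoc mult_left_mono)
  qed
  moreover have "integral {0..t} (\<lambda>\<tau>. exp (- lam * \<tau>) * lam * L) = (1 - exp (- lam * t)) * L"
    using int_lam[OF Suc.prems] by simp
  ultimately show ?case by (simp add: Vn_Suc algebra_simps)
qed

lemma An_le: "0 \<le> t \<Longrightarrow> An L n t \<le> L * exp (- cL * t)"
proof (induction n arbitrary: t)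
  case 0
  have "exp (- lam * t) \<le> exp (- cL * t)"
    using lam_cL_pos 0 by (simp add: mult_right_mono)
  then show ?case using L0 by (simp add: An_def Sm_0 mult_left_mono mult.commute)
next
  case (Suc n)
  have y: "0 \<le> L" "L \<le> 1" using L0 L1 by auto
  let ?M = "\<lambda>\<tau>. Mn L n (t - \<tau>)"
  let ?V = "\<lambda>\<tau>. Vn L n (t - \<tau>)"
  let ?N = "\<lambda>\<tau>. Nn L n (t - \<tau>)"
  let ?A = "\<lambda>\<tau>. An L n (t - \<tau>)"
  have cM: "continuous_on {0..t} ?M" unfolding Mn_def by (rule Sm_refl)
  have cV: "continuous_on {0..t} ?V" unfolding Vn_def by (rule Sm_refl)
  have cN: "continuous_on {0..t} ?N" unfolding Nn_def by (rule Sm_refl)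
  have cA: "continuous_on {0..t} ?A" unfolding An_def by (rule Sm_refl)
  have "integral {0..t} (\<lambda>\<tau>. exp (- lam * \<tau>) * (s * ?A \<tau> * ?V \<tau> + g * ?A \<tau> * ((?M \<tau>)^2 - (?N \<tau>)^2) + u * ?A \<tau>))
        \<le> integral {0..t} (\<lambda>\<tau>. ((lam - cL) * L * exp (- cL * t)) * exp (- (lam - cL) * \<tau>))"
  proof (rule integral_le)
    show "(\<lambda>\<tau>. exp (- lam * \<tau>) * (s * ?A \<tau> * ?V \<tau> + g * ?A \<tau> * ((?M \<tau>)^2 - (?N \<tau>)^2) + u * ?A \<tau>)) integrable_on {0..t}"
      by (rule integrable_continuous_interval) (intro continuous_intros cM cV cN cA)
    show "(\<lambda>\<tau>. ((lam - cL) * L * exp (- cL * t)) * exp (- (lam - cL) * \<tau>)) integrable_on {0..t}"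
      by (rule integrable_continuous_interval) (intro continuous_intros)
    fix \<tau> assume tau: "\<tau> \<in> {0..t}"
    then have tt: "0 \<le> t - \<tau>" by auto
    note F = MN_facts[OF y tt, of n]
    have VL: "?V \<tau> \<le> L" using Vn_le[OF tt] .
    have AL: "?A \<tau> \<le> L * exp (- cL * (t - \<tau>))" using Suc.IH[OF tt] .
    have MV: "?V \<tau> \<le> ?M \<tau>" using F Nn_eq[of L n "t - \<tau>"] by simp
    define K where "K = s * ?V \<tau> + g * ((?M \<tau>)^2 - (?N \<tau>)^2) + u"
    have D: "(?M \<tau>)^2 - (?N \<tau>)^2 \<le> L * (2 - L)"
    proof -
      have "(?M \<tau>)^2 - (?N \<tau>)^2 = ?V \<tau> * (2 * ?M \<tau> - ?V \<tau>)" using F(5) .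
      also have "\<dots> \<le> ?V \<tau> * (2 - ?V \<tau>)" using F(1) F(4) by (intro mult_left_mono) auto
      also have "\<dots> \<le> L * (2 - L)" using F(1) VL y by (intro ineq_V1) auto
      finally show ?thesis .
    qed
    have D0: "0 \<le> (?M \<tau>)^2 - (?N \<tau>)^2"
      using F(1) F(5) MV by simp
    have K0: "0 \<le> K" using F(1) D0 s_pos g_nn u_pos by (simp add: K_def)
    have KL: "K \<le> lam - cL"
    proof -
      have "s * ?V \<tau> \<le> s * L" using VL s_pos by simp
      moreover have "g * ((?M \<tau>)^2 - (?N \<tau>)^2) \<le> g * (L * (2 - L))" using D g_nn by (simp add: mult_left_mono)
      ultimately show ?thesis unfolding lam_cL K_def by linarith
    qed
    have "s * ?A \<tau> * ?V \<tau> + g * ?A \<tau> * ((?M \<tau>)^2 - (?N \<tau>)^2) + u * ?A \<tau> = ?A \<tau> * K"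
      by (simp add: K_def algebra_simps)
    also have "\<dots> \<le> (L * exp (- cL * (t - \<tau>))) * (lam - cL)"
      using AL KL K0 F(3) by (intro mult_mono) auto
    finally have b: "s * ?A \<tau> * ?V \<tau> + g * ?A \<tau> * ((?M \<tau>)^2 - (?N \<tau>)^2) + u * ?A \<tau> \<le> (L * exp (- cL * (t - \<tau>))) * (lam - cL)" .
    have ee: "exp (- lam * \<tau>) * exp (- cL * (t - \<tau>)) = exp (- cL * t) * exp (- (lam - cL) * \<tau>)"
      by (simp add: exp_add[symmetric] algebra_simps)
    have "exp (- lam * \<tau>) * (s * ?A \<tau> * ?V \<tau> + g * ?A \<tau> * ((?M \<tau>)^2 - (?N \<tau>)^2) + u * ?A \<tau>)
        \<le> exp (- lam * \<tau>) * ((L * exp (- cL * (t - \<tau>))) * (lam - cL))"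
      using b by (intro mult_left_mono) auto
    also have "\<dots> = ((lam - cL) * L) * (exp (- lam * \<tau>) * exp (- cL * (t - \<tau>)))" by (simp add: algebra_simps)
    also have "\<dots> = ((lam - cL) * L * exp (- cL * t)) * exp (- (lam - cL) * \<tau>)" unfolding ee by (simp add: algebra_simps)
    finally show "exp (- lam * \<tau>) * (s * ?A \<tau> * ?V \<tau> + g * ?A \<tau> * ((?M \<tau>)^2 - (?N \<tau>)^2) + u * ?A \<tau>)
        \<le> ((lam - cL) * L * exp (- cL * t)) * exp (- (lam - cL) * \<tau>)" .
  qed
  moreover have "integral {0..t} (\<lambda>\<tau>. ((lam - cL) * L * exp (- cL * t)) * exp (- (lam - cL) * \<tau>))
      = L * exp (- cL * t) * (1 - exp (- (lam - cL) * t))"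
    using int_exp[OF lam_cL_pos Suc.prems] lam_cL_pos by simp
  moreover have "exp (- cL * t) * exp (- (lam - cL) * t) = exp (- lam * t)"
    by (simp add: exp_add[symmetric] algebra_simps)
  ultimately show ?case by (simp add: An_Suc algebra_simps)
qed

end


lemma lw1_zero: "(\<not> vtype T \<longrightarrow> leaf_weight 1 T = 0) \<and> (\<not> anc_type T \<longrightarrow> leaf_weight 1 T = 0)"
  by (induction T) auto

context asgp
begin

lemma asg_g_eq: "asg_g s g u r y = infsum (\<lambda>T. W y T r) {T. anc_type T}"
  by (simp add: asg_g_def W_def P_def)

lemma fin_sum_le:
  assumes y: "0 \<le> y" "y \<le> 1" and r: "0 \<le> r" and F: "finite F" "F \<subseteq> {T. anc_type T}"
  shows "\<exists>n. sum (\<lambda>T. W y T r) F \<le> An y n r"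
proof -
  obtain n where n: "F \<subseteq> Hs n" using finite_in_Hs[OF F(1)] by blast
  have "sum (\<lambda>T. W y T r) F = (\<Sum>T\<in>F. of_bool (anc_type T) * W y T r)"
    using F(2) by (intro sum.cong) auto
  also have "\<dots> \<le> (\<Sum>T\<in>Hs n. of_bool (anc_type T) * W y T r)"
    using n W_nonneg[OF y r] by (intro sum_mono2 finite_Hs) auto
  finally show ?thesis unfolding An_def Sm_def by blast
qed

lemma summ:
  assumes y: "0 \<le> y" "y \<le> 1" and r: "0 \<le> r" and B: "\<And>n. An y n r \<le> B"
  shows "(\<lambda>T. W y T r) summable_on {T. anc_type T}" "infsum (\<lambda>T. W y T r) {T. anc_type T} \<le> B"
proof -
  show sm: "(\<lambda>T. W y T r) summable_on {T. anc_type T}"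
  proof (rule nonneg_bdd_above_summable_on)
    show "\<And>x. x \<in> {T. anc_type T} \<Longrightarrow> 0 \<le> W y x r" using W_nonneg[OF y r] by auto
    show "bdd_above (sum (\<lambda>T. W y T r) ` {F. F \<subseteq> {T. anc_type T} \<and> finite F})"
    proof (rule bdd_aboveI)
      fix x assume "x \<in> sum (\<lambda>T. W y T r) ` {F. F \<subseteq> {T. anc_type T} \<and> finite F}"
      then obtain F where F: "x = sum (\<lambda>T. W y T r) F" "F \<subseteq> {T. anc_type T}" "finite F" by auto
      then obtain n where "sum (\<lambda>T. W y T r) F \<le> An y n r" using fin_sum_le[OF y r, of F] by blast
      then show "x \<le> B" using F(1) B[of n] by linarith
    qed
  qed
  show "infsum (\<lambda>T. W y T r) {T. anc_type T} \<le> B"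
  proof (rule infsum_le_finite_sums[OF sm])
    fix F assume "finite F" "F \<subseteq> {T. anc_type T}"
    then obtain n where "sum (\<lambda>T. W y T r) F \<le> An y n r" using fin_sum_le[OF y r, of F] by blast
    then show "sum (\<lambda>T. W y T r) F \<le> B" using B[of n] by linarith
  qed
qed

lemma An_le_infsum:
  assumes y: "0 \<le> y" "y \<le> 1" and r: "0 \<le> r" and sm: "(\<lambda>T. W y T r) summable_on {T. anc_type T}"
  shows "An y n r \<le> infsum (\<lambda>T. W y T r) {T. anc_type T}"
proof -
  have "An y n r = sum (\<lambda>T. W y T r) (Hs n \<inter> {T. anc_type T})"
    unfolding An_def Sm_def sum.inter_restrict[OF finite_Hs] by (intro sum.cong refl) auto
  also have "\<dots> \<le> infsum (\<lambda>T. W y T r) {T. anc_type T}"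
    using W_nonneg[OF y r] by (intro finite_sum_le_infsum[OF sm]) (auto simp: finite_Hs)
  finally show ?thesis .
qed

lemma G1:
  assumes r: "0 \<le> r"
  shows "asg_g s g u r 1 = 1"
proof -
  have y: "(0::real) \<le> 1" "(1::real) \<le> 1" by auto
  have AM: "An 1 n r = Mn 1 n r" for n
    unfolding An_def Mn_def Sm_def
    by (intro sum.cong refl) (auto simp: W_def lw1_zero)
  have le: "An 1 n r \<le> 1" for n using AM Mn_le1[OF y r] by simp
  note S = summ[OF y r le]
  have ge: "1 - (Cc * r) ^ n / fact n \<le> infsum (\<lambda>T. W 1 T r) {T. anc_type T}" for n
    using Mn_low[OF y r, of n] An_le_infsum[OF y r S(1), of n] AM[of n] by simp
  have lim: "(\<lambda>n. (Cc * r) ^ n / fact n) \<longlonglongrightarrow> 0"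
  proof -
    have "(\<lambda>n. inverse (fact n) * (Cc * r) ^ n) \<longlonglongrightarrow> 0"
      by (rule summable_LIMSEQ_zero[OF summable_exp])
    then show ?thesis by (simp add: divide_inverse mult.commute)
  qed
  have "1 \<le> infsum (\<lambda>T. W 1 T r) {T. anc_type T}"
  proof (rule ccontr)
    assume "\<not> ?thesis"
    then have "0 < 1 - infsum (\<lambda>T. W 1 T r) {T. anc_type T}" by simp
    from order_tendstoD(2)[OF lim this] obtain N where
      "\<And>n. n \<ge> N \<Longrightarrow> (Cc * r) ^ n / fact n < 1 - infsum (\<lambda>T. W 1 T r) {T. anc_type T}"
      unfolding eventually_sequentially by blast
    from this[of N] ge[of N] show False by simp
  qed
  then show ?thesis using S(2) by (simp add: asg_g_eq)
qed

end

context asgpL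
begin

lemma G0: "((\<lambda>r. asg_g s g u r L) \<longlongrightarrow> 0) at_top"
proof (rule tendsto_sandwich)
  have y: "0 \<le> L" "L \<le> 1" using L0 L1 by auto
  show "\<forall>\<^sub>F r in at_top. 0 \<le> asg_g s g u r L"
    using eventually_ge_at_top[of 0]
    by eventually_elim (use W_nonneg[OF y] in \<open>auto simp: asg_g_eq intro!: infsum_nonneg\<close>)
  show "\<forall>\<^sub>F r in at_top. asg_g s g u r L \<le> L * exp (- cL * r)"
    using eventually_ge_at_top[of 0]
  proof eventually_elim
    case (elim r)
    show ?case unfolding asg_g_eq by (rule summ(2)[OF y elim An_le[OF elim]])
  qed
  show "((\<lambda>r. 0) \<longlongrightarrow> (0::real)) at_top" by simp
  have "LIM r at_top. (- cL) * r :> at_bot"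
    using cL_pos by (intro filterlim_tendsto_neg_mult_at_bot[OF tendsto_const _ filterlim_ident]) auto
  then have "((\<lambda>r. exp (- cL * r)) \<longlongrightarrow> 0) at_top"
    by (rule filterlim_compose[OF exp_at_bot])
  then show "((\<lambda>r. L * exp (- cL * r)) \<longlongrightarrow> 0) at_top"
    using tendsto_mult_left[of _ 0 at_top L] by simp
qed

end


locale odeY =
  fixes Y f :: "real \<Rightarrow> real"
  assumes fcont: "continuous_on UNIV f"
    and deriv: "\<And>t. 0 \<le> t \<Longrightarrow> (Y has_real_derivative f (Y t)) (at t within {0..})"
begin

lemma Ycont: "continuous_on {0..} Y"
  using deriv by (intro DERIV_continuous_on) auto

lemma Ycont_Icc: "continuous_on {a..b} Y" if "0 \<le> a" for a b
  using continuous_on_subset[OF Ycont] that by auto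

lemma deriv_at: "0 < x \<Longrightarrow> (Y has_real_derivative f (Y x)) (at x)"
proof -
  assume x: "0 < x"
  have "(Y has_real_derivative f (Y x)) (at x within {0..})" using deriv[of x] x by simp
  then have "(Y has_real_derivative f (Y x)) (at x within {0..x+1})"
    by (rule has_field_derivative_subset) auto
  then show ?thesis using at_within_Icc_at[of 0 x "x+1"] x by simp
qed

lemma mvtY:
  assumes "0 \<le> a" "a < b"
  shows "\<exists>z. a < z \<and> z < b \<and> Y b - Y a = (b - a) * f (Y z)"
proof -
  have dif: "Y differentiable (at x)" if "a < x" "x < b" for x
  proof -
    have "0 < x" using that assms by linarith
    then show ?thesis unfolding real_differentiable_def using deriv_at by blast
  qed
  obtain l z where z: "a < z" "z < b" "DERIV Y z :> l" "Y b - Y a = (b - a) * l"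
    using MVT[OF assms(2) Ycont_Icc[OF assms(1)] dif] by blast
  have "l = f (Y z)" using DERIV_unique[OF z(3) deriv_at] z assms by auto
  then show ?thesis using z by auto
qed

lemma barrier:
  assumes kf: "\<And>x. f x - f m = (x - m) * k x" and kc: "continuous_on UNIV k" and T: "0 \<le> T"
  shows "\<exists>E>0. \<exists>D\<ge>0. (Y T - m) * E = (Y 0 - m) + D * f m"
proof (cases "T = 0")
  case True then show ?thesis by (intro exI[of _ 1] exI[of _ 0]) auto
next
  case False
  then have T0: "0 < T" using T by auto
  define K where "K t = integral {0..t} (\<lambda>\<tau>. k (Y \<tau>))" for t
  define F where "F t = (Y t - m) * exp (- K t)" for t
  have ckY: "continuous_on {0..T} (\<lambda>\<tau>. k (Y \<tau>))"
    by (rule continuous_on_compose2[OF kc Ycont_Icc]) auto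
  have Kd: "(K has_real_derivative k (Y x)) (at x within {0..T})" if "x \<in> {0..T}" for x
    unfolding K_def by (rule integral_has_real_derivative[OF ckY that])
  have Kc: "continuous_on {0..T} K" using Kd by (rule DERIV_continuous_on)
  have Fc: "continuous_on {0..T} F" unfolding F_def
    by (intro continuous_intros Ycont_Icc Kc) auto
  have Fd: "(F has_real_derivative f m * exp (- K x)) (at x)" if "0 < x" "x < T" for x
  proof -
    have K': "(K has_real_derivative k (Y x)) (at x)"
      using Kd[of x] that at_within_Icc_at[of 0 x T] by simp
    have d1: "((\<lambda>t. Y t - m) has_real_derivative f (Y x) - 0) (at x)"
      by (rule DERIV_diff[OF deriv_at[OF that(1)] DERIV_const])
    have d2: "((\<lambda>t. exp (- K t)) has_real_derivative exp (- K x) * (- k (Y x))) (at x)"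
      by (rule DERIV_chain2[OF DERIV_exp DERIV_minus[OF K']])
    have "(F has_real_derivative ((f (Y x) - 0) * exp (- K x) + (exp (- K x) * (- k (Y x))) * (Y x - m))) (at x)"
      unfolding F_def by (rule DERIV_mult[OF d1 d2])
    moreover have "(f (Y x) - 0) * exp (- K x) + (exp (- K x) * (- k (Y x))) * (Y x - m) = f m * exp (- K x)"
    proof -
      have fy: "f (Y x) = f m + (Y x - m) * k (Y x)" using kf[of "Y x"] by (simp add: algebra_simps)
      show ?thesis unfolding fy by (simp add: algebra_simps)
    qed
    ultimately show ?thesis by simp
  qed
  have dif: "F differentiable (at x)" if "0 < x" "x < T" for x
    unfolding real_differentiable_def using Fd[OF that] by blast
  obtain l z where z: "0 < z" "z < T" "DERIV F z :> l" "F T - F 0 = (T - 0) * l"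
    using MVT[OF T0 Fc dif] by blast
  have "l = f m * exp (- K z)" using DERIV_unique[OF z(3) Fd[OF z(1,2)]] .
  moreover have "K 0 = 0" by (simp add: K_def)
  ultimately have "(Y T - m) * exp (- K T) = (Y 0 - m) + (T * exp (- K z)) * f m"
    using z(4) by (simp add: F_def algebra_simps)
  then show ?thesis using T0 by (intro exI[of _ "exp (- K T)"] conjI exI[of _ "T * exp (- K z)"]) auto
qed

lemma barrier_eq:
  assumes kf: "\<And>x. f x - f m = (x - m) * k x" and kc: "continuous_on UNIV k" and T: "0 \<le> T"
    and fm: "f m = 0"
  shows "Y 0 < m \<Longrightarrow> Y T < m" "Y 0 = m \<Longrightarrow> Y T = m" "Y 0 > m \<Longrightarrow> Y T > m"
proof -
  obtain E D where ED: "E > 0" "(Y T - m) * E = (Y 0 - m) + D * f m"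
    using barrier[OF kf kc T] by blast
  then have e: "(Y T - m) * E = Y 0 - m" using fm by simp
  show "Y 0 < m \<Longrightarrow> Y T < m"
  proof -
    assume "Y 0 < m"
    then have "(Y T - m) * E < 0" using e by simp
    then show "Y T < m" using ED(1) by (simp add: mult_less_0_iff)
  qed
  show "Y 0 = m \<Longrightarrow> Y T = m" using e ED(1) by simp
  show "Y 0 > m \<Longrightarrow> Y T > m"
  proof -
    assume "Y 0 > m"
    then have "0 < (Y T - m) * E" using e by simp
    then show "Y T > m" using ED(1) by (simp add: zero_less_mult_iff)
  qed
qed

lemma barrier_ge:
  assumes kf: "\<And>x. f x - f m = (x - m) * k x" and kc: "continuous_on UNIV k" and T: "0 \<le> T"
    and fm: "0 \<le> f m" and Y0: "m \<le> Y 0"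
  shows "m \<le> Y T"
proof -
  obtain E D where ED: "E > 0" "D \<ge> 0" "(Y T - m) * E = (Y 0 - m) + D * f m"
    using barrier[OF kf kc T] by blast
  then have "0 \<le> (Y T - m) * E" using fm Y0 by simp
  then show ?thesis using ED(1) by (simp add: zero_le_mult_iff)
qed

lemma up:
  assumes below: "\<And>t. 0 \<le> t \<Longrightarrow> Y t < e" and pos: "\<And>t. 0 \<le> t \<Longrightarrow> 0 < f (Y t)"
    and posr: "\<And>x. Y 0 \<le> x \<Longrightarrow> x < e \<Longrightarrow> 0 < f x"
  shows "(Y \<longlongrightarrow> e) at_top"
proof -
  have mono: "Y a \<le> Y b" if ab: "0 \<le> a" "a \<le> b" for a b
  proof (cases "a = b")
    case False
    then have "a < b" using ab by simp
    then obtain z where z: "a < z" "z < b" "Y b - Y a = (b - a) * f (Y z)"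
      using mvtY[of a b] ab by blast
    have "0 < f (Y z)" using pos z(1) ab by auto
    then have "0 \<le> (b - a) * f (Y z)" using ab by simp
    then show ?thesis using z(3) by simp
  qed simp
  have reach: "\<exists>t0\<ge>0. a < Y t0" if a: "a < e" for a
  proof (rule ccontr)
    assume "\<not> ?thesis"
    then have le: "\<And>t. 0 \<le> t \<Longrightarrow> Y t \<le> a" by (auto simp: not_less)
    have Y0a: "Y 0 \<le> a" using le by simp
    obtain x0 where x0: "x0 \<in> {Y 0..a}" "\<forall>x\<in>{Y 0..a}. f x0 \<le> f x"
      using continuous_attains_inf[of "{Y 0..a}" f] Y0a continuous_on_subset[OF fcont] by auto
    define \<delta> where "\<delta> = f x0"
    have dpos: "0 < \<delta>" unfolding \<delta>_def using x0(1) a by (intro posr) auto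
    define T where "T = (e - Y 0) / \<delta> + 1"
    have eY: "0 < e - Y 0" using below[of 0] by simp
    have "0 < (e - Y 0) / \<delta>" using eY dpos by simp
    then have T0: "0 < T" by (simp add: T_def)
    obtain z where z: "0 < z" "z < T" "Y T - Y 0 = (T - 0) * f (Y z)" using mvtY[of 0 T] T0 by auto
    have "Y z \<in> {Y 0..a}" using mono[of 0 z] le[of z] z by auto
    then have "\<delta> \<le> f (Y z)" using x0 by (auto simp: \<delta>_def)
    then have "T * \<delta> \<le> Y T - Y 0" using z T0 by (simp add: mult_left_mono)
    moreover have "T * \<delta> = (e - Y 0) + \<delta>" using dpos by (simp add: T_def field_simps)
    ultimately have "e < Y T" using dpos by simp
    then show False using below[of T] T0 by simp
  qed
  show ?thesis
  proof (rule order_tendstoI)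
    fix a assume "a < e"
    then obtain t0 where t0: "0 \<le> t0" "a < Y t0" using reach by blast
    show "\<forall>\<^sub>F t in at_top. a < Y t"
    proof (rule eventually_mono[OF eventually_ge_at_top[of t0]])
      fix t assume "t0 \<le> t"
      then show "a < Y t" using mono[of t0 t] t0 by linarith
    qed
  next
    fix a assume "e < a"
    show "\<forall>\<^sub>F t in at_top. Y t < a"
    proof (rule eventually_mono[OF eventually_ge_at_top[of 0]])
      fix t :: real assume "0 \<le> t"
      then show "Y t < a" using below[of t] \<open>e < a\<close> by linarith
    qed
  qed
qed

end


lemma drift_fact: "drift s g u x = (1 - x) * (g * x^2 - (s + g) * x + u)"
  by (simp add: drift_def algebra_simps power2_eq_square)

lemma roots:
  fixes s g u :: real
  assumes g: "0 < g" and sg: "0 \<le> Defs.sigma s g u"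
  defines "y2 \<equiv> (1 + s / g - sqrt (Defs.sigma s g u)) / 2"
  shows "\<And>x. g * x^2 - (s + g) * x + u = g * (x - y2) * (x - ybar3 s g u)"
    "y2 \<le> ybar3 s g u" "y2 + ybar3 s g u = 1 + s / g" "y2 * ybar3 s g u = u / g"
proof -
  define r where "r = sqrt (Defs.sigma s g u)"
  have "r^2 = Defs.sigma s g u" unfolding r_def by (rule real_sqrt_pow2[OF sg])
  then have r2: "r^2 = (1 + s / g)^2 - 4 * u / g" by (simp add: sigma_def)
  have r0: "0 \<le> r" using sg by (simp add: r_def)
  have y3: "ybar3 s g u = (1 + s / g + r) / 2" by (simp add: ybar3_def r_def)
  have y2: "y2 = (1 + s / g - r) / 2" by (simp add: y2_def r_def)
  show sum: "y2 + ybar3 s g u = 1 + s / g" unfolding y2 y3 by (simp add: field_simps)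
  show "y2 \<le> ybar3 s g u" unfolding y2 y3 using r0 by simp
  show prod: "y2 * ybar3 s g u = u / g"
  proof -
    have "y2 * ybar3 s g u = ((1 + s / g)^2 - r^2) / 4" unfolding y2 y3 by (simp add: field_simps power2_eq_square)
    also have "\<dots> = u / g" unfolding r2 by simp
    finally show ?thesis .
  qed
  fix x
  have "g * (x - y2) * (x - ybar3 s g u) = g * x^2 - g * (y2 + ybar3 s g u) * x + g * (y2 * ybar3 s g u)"
    by (simp add: algebra_simps power2_eq_square)
  also have "\<dots> = g * x^2 - (s + g) * x + u" unfolding sum prod using g by (simp add: field_simps)
  finally show "g * x^2 - (s + g) * x + u = g * (x - y2) * (x - ybar3 s g u)" by simp
qed

lemma sign_fact:
  fixes s g u a b x :: real
  assumes "0 < g" "x < 1"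
  shows "drift s g u x = (1 - x) * g * ((x - a) * (x - b)) \<Longrightarrow> x < a \<Longrightarrow> x < b \<Longrightarrow> 0 < drift s g u x"
    and "drift s g u x = (1 - x) * g * ((x - a) * (x - b)) \<Longrightarrow> a < x \<Longrightarrow> x < b \<Longrightarrow> drift s g u x < 0"
    and "drift s g u x = (1 - x) * g * ((x - a) * (x - b)) \<Longrightarrow> a < x \<Longrightarrow> b < x \<Longrightarrow> 0 < drift s g u x"
proof -
  have p: "0 < (1 - x) * g" using assms by simp
  show "drift s g u x = (1 - x) * g * ((x - a) * (x - b)) \<Longrightarrow> x < a \<Longrightarrow> x < b \<Longrightarrow> 0 < drift s g u x"
    using p by (simp add: mult_neg_neg)
  show "drift s g u x = (1 - x) * g * ((x - a) * (x - b)) \<Longrightarrow> a < x \<Longrightarrow> x < b \<Longrightarrow> drift s g u x < 0"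
    using p by (simp add: mult_pos_neg)
  show "drift s g u x = (1 - x) * g * ((x - a) * (x - b)) \<Longrightarrow> a < x \<Longrightarrow> b < x \<Longrightarrow> 0 < drift s g u x"
    using p by simp
qed

lemma case_i:
  fixes s g u :: real
  assumes s: "0 < s" and g: "0 \<le> g" and u: "0 < u" and c: "u < s \<or> (u = s \<and> s < g)"
  shows "\<exists>e. 0 < e \<and> e < 1 \<and> drift s g u e = 0 \<and> (\<forall>x. 0 \<le> x \<and> x < e \<longrightarrow> 0 < drift s g u x)
           \<and> (\<forall>x. e < x \<and> x < 1 \<longrightarrow> drift s g u x < 0)"
proof (cases "g = 0")
  case True
  then have us: "u < s" using c s by auto
  have D: "drift s g u x = (1 - x) * (u - s * x)" for x using True by (simp add: drift_fact)
  show ?thesis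
  proof (intro exI[of _ "u / s"] conjI allI impI)
    show "0 < u / s" "u / s < 1" using s u us by auto
    show "drift s g u (u / s) = 0" using s by (simp add: D)
    fix x
    show "0 \<le> x \<and> x < u / s \<Longrightarrow> 0 < drift s g u x"
    proof -
      assume x: "0 \<le> x \<and> x < u / s"
      then have sx: "s * x < u" using s by (simp add: field_simps)
      then have "s * x < s * 1" using us by linarith
      then have x1: "x < 1" using s by (simp only: mult_less_cancel_left_pos)
      show ?thesis using sx x1 by (simp add: D)
    qed
    show "u / s < x \<and> x < 1 \<Longrightarrow> drift s g u x < 0"
    proof -
      assume x: "u / s < x \<and> x < 1"
      then have "u < s * x" using s by (simp add: field_simps)
      then show ?thesis using x by (simp add: D mult_pos_neg)
    qed
  qed
next
  case False
  then have g0: "0 < g" using g by simp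
  have sg: "0 \<le> Defs.sigma s g u"
  proof -
    have "Defs.sigma s g u - (1 - s / g)^2 = 4 * (s - u) / g" using g0 by (simp add: sigma_def field_simps power2_eq_square)
    moreover have "0 \<le> 4 * (s - u) / g" using c g0 by auto
    moreover have "0 \<le> (1 - s / g)^2" by simp
    ultimately show ?thesis by linarith
  qed
  define y2 where "y2 = (1 + s / g - sqrt (Defs.sigma s g u)) / 2"
  define y3 where "y3 = ybar3 s g u"
  note R = roots[OF g0 sg, folded y2_def y3_def]
  have D: "drift s g u x = (1 - x) * g * ((x - y2) * (x - y3))" for x
    unfolding drift_fact R(1)[of x] by (simp add: algebra_simps)
  have q1: "u - s = g * ((1 - y2) * (1 - y3))" using R(1)[of 1] by (simp add: algebra_simps)
  have y23: "y2 < 1 \<and> 1 \<le> y3"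
  proof (cases "u < s")
    case True
    then have "g * ((1 - y2) * (1 - y3)) < 0" using q1 by simp
    then have "(1 - y2) * (1 - y3) < 0" using g0 by (simp add: mult_less_0_iff)
    then show ?thesis using R(2) by (auto simp: mult_less_0_iff)
  next
    case False
    then have us: "u = s" "s < g" using c by auto
    then have "(1 - y2) * (1 - y3) = 0" using q1 g0 by simp
    moreover have "y2 + y3 < 2"
    proof -
      have "s / g < 1" using us g0 by simp
      then show ?thesis using R(3) by linarith
    qed
    ultimately show ?thesis using R(2) by auto
  qed
  have y2pos: "0 < y2"
  proof -
    have "0 < y2 * y3" using R(4) u g0 by simp
    then show ?thesis using y23 by (simp add: zero_less_mult_iff)
  qed
  show ?thesis
  proof (intro exI[of _ y2] conjI allI impI)
    show "0 < y2" "y2 < 1" using y2pos y23 by auto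
    show "drift s g u y2 = 0" by (simp add: D)
    fix x
    show "0 \<le> x \<and> x < y2 \<Longrightarrow> 0 < drift s g u x"
      using sign_fact(1)[OF g0, where s=s and u=u and a=y2 and b=y3 and x=x] D y23 by auto
    show "y2 < x \<and> x < 1 \<Longrightarrow> drift s g u x < 0"
      using sign_fact(2)[OF g0, where s=s and u=u and a=y2 and b=y3 and x=x] D y23 by auto
  qed
qed

lemma case_ii:
  fixes s g u :: real
  assumes s: "0 < s" and g: "0 \<le> g" and u: "0 < u"
    and c: "ereal u > ucheck s g \<or> (s \<ge> g \<and> s \<le> u \<and> ereal u \<le> ucheck s g)"
  shows "\<forall>x. 0 \<le> x \<and> x < 1 \<longrightarrow> 0 < drift s g u x"
proof (intro allI impI)
  fix x :: real assume x: "0 \<le> x \<and> x < 1"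
  have "0 < g * x^2 - (s + g) * x + u"
  proof (cases "ereal u > ucheck s g")
    case True
    then have g0: "g \<noteq> 0" by (auto simp: ucheck_def)
    then have gp: "0 < g" using g by simp
    have "(1 / g) * ((s + g) / 2)^2 < u" using True g0 by (simp add: ucheck_def)
    then have "(s + g)^2 < 4 * g * u" using gp by (simp add: field_simps power2_eq_square)
    moreover have "4 * g * (g * x^2 - (s + g) * x + u) = (2 * g * x - (s + g))^2 + (4 * g * u - (s + g)^2)"
      by (simp add: algebra_simps power2_eq_square)
    moreover have "0 \<le> (2 * g * x - (s + g))^2" by simp
    ultimately have "0 < 4 * g * (g * x^2 - (s + g) * x + u)" by linarith
    then show ?thesis using gp by (simp add: zero_less_mult_iff)
  next
    case False
    then have c2: "s \<ge> g" "s \<le> u" using c by auto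
    have "g * x^2 - (s + g) * x + u = (1 - x) * (s - g * x) + (u - s)" by (simp add: algebra_simps power2_eq_square)
    moreover have "0 < s - g * x"
    proof -
      have "s - g * x = (s - g) + g * (1 - x)" by (simp add: algebra_simps)
      moreover have "0 < (s - g) + g * (1 - x)"
      proof (cases "g = 0")
        case True then show ?thesis using s by simp
      next
        case False then have "0 < g * (1 - x)" using g x by simp
        then show ?thesis using c2 by simp
      qed
      ultimately show ?thesis by simp
    qed
    moreover have "0 < (1 - x) * (s - g * x)" using x \<open>0 < s - g * x\<close> by simp
    ultimately show ?thesis using c2 by linarith
  qed
  then show "0 < drift s g u x" using x by (simp add: drift_fact)
qed

lemma case_iii:
  fixes s g u :: real
  assumes s: "0 < s" and g: "0 \<le> g" and u: "0 < u" and c: "s < g" "s < u" "ereal u \<le> ucheck s g"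
  shows "\<exists>y2. 0 < y2 \<and> y2 \<le> ybar3 s g u \<and> ybar3 s g u < 1 \<and> drift s g u y2 = 0 \<and> drift s g u (ybar3 s g u) = 0
      \<and> (\<forall>x. 0 \<le> x \<and> x < y2 \<longrightarrow> 0 < drift s g u x)
      \<and> (\<forall>x. y2 < x \<and> x < ybar3 s g u \<longrightarrow> drift s g u x < 0)
      \<and> (\<forall>x. ybar3 s g u < x \<and> x < 1 \<longrightarrow> 0 < drift s g u x)"
proof -
  have g0: "0 < g" using c s by simp
  have "u \<le> (1 / g) * ((s + g) / 2)^2" using c(3) g0 by (simp add: ucheck_def)
  then have "4 * g * u \<le> (s + g)^2" using g0 by (simp add: field_simps power2_eq_square)
  then have sg: "0 \<le> Defs.sigma s g u"
  proof -
    assume h: "4 * g * u \<le> (s + g)^2"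
    have "Defs.sigma s g u = ((s + g)^2 - 4 * g * u) / g^2" using g0 by (simp add: sigma_def field_simps power2_eq_square)
    then show ?thesis using h by simp
  qed
  define y2 where "y2 = (1 + s / g - sqrt (Defs.sigma s g u)) / 2"
  define y3 where "y3 = ybar3 s g u"
  note R = roots[OF g0 sg, folded y2_def y3_def]
  have D: "drift s g u x = (1 - x) * g * ((x - y2) * (x - y3))" for x
    unfolding drift_fact R(1)[of x] by (simp add: algebra_simps)
  have q1: "u - s = g * ((1 - y2) * (1 - y3))" using R(1)[of 1] by (simp add: algebra_simps)
  have "0 < g * ((1 - y2) * (1 - y3))" using q1 c(2) by simp
  then have pp: "0 < (1 - y2) * (1 - y3)" using g0 by (simp add: zero_less_mult_iff)
  have "s / g < 1" using c(1) g0 by simp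
  then have sum2: "y2 + y3 < 2" using R(3) by linarith
  have y31: "y3 < 1"
  proof (rule ccontr)
    assume "\<not> y3 < 1"
    then have "1 - y3 \<le> 0" by simp
    then have "1 - y2 < 0" using pp by (simp add: zero_less_mult_iff)
    then show False using sum2 \<open>\<not> y3 < 1\<close> by simp
  qed
  have y2pos: "0 < y2"
  proof -
    have "0 < y2 * y3" using R(4) u g0 by simp
    moreover have "0 < y3"
    proof -
      have "0 < s / g" using s g0 by simp
      then show ?thesis using R(2) R(3) by linarith
    qed
    ultimately show ?thesis by (simp add: zero_less_mult_iff)
  qed
  show ?thesis
  proof (intro exI[of _ y2] conjI allI impI)
    show "0 < y2" "y2 \<le> ybar3 s g u" "ybar3 s g u < 1" using y2pos R(2) y31 by (auto simp: y3_def)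
    show "drift s g u y2 = 0" "drift s g u (ybar3 s g u) = 0" by (simp_all add: D y3_def)
    fix x
    show "0 \<le> x \<and> x < y2 \<Longrightarrow> 0 < drift s g u x"
      using sign_fact(1)[OF g0, where s=s and u=u and a=y2 and b=y3 and x=x] D R(2) y31 by auto
    show "y2 < x \<and> x < ybar3 s g u \<Longrightarrow> drift s g u x < 0"
      using sign_fact(2)[OF g0, where s=s and u=u and a=y2 and b=y3 and x=x] D y31 by (auto simp: y3_def)
    show "ybar3 s g u < x \<and> x < 1 \<Longrightarrow> 0 < drift s g u x"
      using sign_fact(3)[OF g0, where s=s and u=u and a=y2 and b=y3 and x=x] D R(2) by (auto simp: y3_def)
  qed
qed


definition kk :: "real \<Rightarrow> real \<Rightarrow> real \<Rightarrow> real \<Rightarrow> real \<Rightarrow> real" where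
  "kk s g u m x = - g * (x^2 + x * m + m^2) + (s + 2 * g) * (x + m) - (s + g + u)"

lemma drift_kk: "drift s g u x - drift s g u m = (x - m) * kk s g u m x"
  by (simp add: drift_def kk_def algebra_simps power2_eq_square)

lemma kk_cont: "continuous_on UNIV (kk s g u m)"
proof -
  have "kk s g u m = (\<lambda>x. - g * (x^2 + x * m + m^2) + (s + 2 * g) * (x + m) - (s + g + u))"
    by (simp add: fun_eq_iff kk_def)
  then show ?thesis by (simp add: continuous_intros)
qed

lemma drift_cont: "continuous_on UNIV (drift s g u)"
proof -
  have "drift s g u = (\<lambda>x. - x * (1 - x) * (s + g * (1 - x)) + u * (1 - x))"
    by (simp add: fun_eq_iff drift_def)
  then show ?thesis by (simp add: continuous_intros)
qed

locale odeD = asgp +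
  fixes Y :: "real \<Rightarrow> real"
  assumes Y0: "0 \<le> Y 0" "Y 0 \<le> 1"
    and derivY: "\<And>t. 0 \<le> t \<Longrightarrow> (Y has_real_derivative drift s g u (Y t)) (at t within {0..})"
begin

sublocale odeY Y "drift s g u"
  by unfold_locales (auto intro: drift_cont derivY)

lemma Y_ge0: "0 \<le> t \<Longrightarrow> 0 \<le> Y t"
  by (rule barrier_ge[OF drift_kk kk_cont]) (use u_pos Y0 in \<open>auto simp: drift_def\<close>)

lemma Y_eq:
  assumes "drift s g u e = 0" "0 \<le> t"
  shows "Y 0 < e \<Longrightarrow> Y t < e" "Y 0 = e \<Longrightarrow> Y t = e" "Y 0 > e \<Longrightarrow> Y t > e"
  using barrier_eq[OF drift_kk kk_cont assms(2) assms(1)] by auto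

lemma Y_lt1: "Y 0 < 1 \<Longrightarrow> 0 \<le> t \<Longrightarrow> Y t < 1"
  using Y_eq(1)[of 1 t] by (simp add: drift_def)

lemma Y_const: "drift s g u e = 0 \<Longrightarrow> Y 0 = e \<Longrightarrow> (Y \<longlongrightarrow> e) at_top"
proof -
  assume a: "drift s g u e = 0" "Y 0 = e"
  have "\<forall>\<^sub>F t in at_top. Y t = e"
    using eventually_ge_at_top[of 0] by (rule eventually_mono) (use Y_eq(2)[OF a(1)] a(2) in auto)
  then show ?thesis by (rule tendsto_eventually)
qed

lemma conv_up:
  assumes "\<And>t. 0 \<le> t \<Longrightarrow> Y t < e \<and> 0 < drift s g u (Y t)"
    and "\<And>x. Y 0 \<le> x \<Longrightarrow> x < e \<Longrightarrow> 0 < drift s g u x"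
  shows "(Y \<longlongrightarrow> e) at_top"
  using up[of e] assms by auto

lemma conv_e:
  assumes De: "drift s g u e = 0" and Db: "drift s g u b = 0" and eb: "e \<le> b"
    and pos: "\<forall>x. 0 \<le> x \<and> x < e \<longrightarrow> 0 < drift s g u x"
    and neg: "\<forall>x. e < x \<and> x < b \<longrightarrow> drift s g u x < 0"
    and Yb: "Y 0 < b"
  shows "(Y \<longlongrightarrow> e) at_top"
proof (cases "Y 0 < e")
  case True
  show ?thesis
  proof (rule conv_up)
    fix t :: real assume t: "0 \<le> t"
    have "Y t < e" using Y_eq(1)[OF De t True] .
    moreover have "0 \<le> Y t" using Y_ge0[OF t] .
    ultimately show "Y t < e \<and> 0 < drift s g u (Y t)" using pos by auto
  next
    fix x assume "Y 0 \<le> x" "x < e"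
    then show "0 < drift s g u x" using pos Y0 by auto
  qed
next
  case False
  show ?thesis
  proof (cases "Y 0 = e")
    case True then show ?thesis using Y_const[OF De] by simp
  next
    case False
    then have gt: "e < Y 0" using \<open>\<not> Y 0 < e\<close> by simp
    interpret Z: odeY "\<lambda>t. - Y t" "\<lambda>x. - drift s g u (- x)"
    proof
      have "continuous_on UNIV (\<lambda>x. drift s g u (- x))"
        by (rule continuous_on_compose2[OF drift_cont]) (auto intro: continuous_intros)
      then show "continuous_on UNIV (\<lambda>x. - drift s g u (- x))" by (intro continuous_intros)
      fix t :: real assume "0 \<le> t"
      then show "((\<lambda>t. - Y t) has_real_derivative - drift s g u (- (- Y t))) (at t within {0..})"
        using DERIV_minus[OF derivY] by simp
    qed
    have "((\<lambda>t. - Y t) \<longlongrightarrow> - e) at_top"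
    proof (rule Z.up)
      fix t :: real assume t: "0 \<le> t"
      have a: "e < Y t" using Y_eq(3)[OF De t gt] .
      have b: "Y t < b" using Y_eq(1)[OF Db t Yb] .
      show "- Y t < - e" using a by simp
      show "0 < - drift s g u (- (- Y t))" using neg a b by auto
    next
      fix x assume "- Y 0 \<le> x" "x < - e"
      then show "0 < - drift s g u (- x)" using neg Yb by auto
    qed
    then have "((\<lambda>t. - (- Y t)) \<longlongrightarrow> - (- e)) at_top" by (rule tendsto_minus)
    then show ?thesis by simp
  qed
qed

end

theorem corollary2p41:
  fixes s \<gamma> u :: real and y :: "real \<Rightarrow> real \<Rightarrow> real"
  assumes "s > 0" and "\<gamma> \<ge> 0" and "u > 0"
    and init: "\<And>y0. y0 \<in> {0..1} \<Longrightarrow> y y0 0 = y0"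
    and ode: "\<And>y0 t. y0 \<in> {0..1} \<Longrightarrow> t \<ge> 0 \<Longrightarrow>
               (y y0 has_real_derivative drift s \<gamma> u (y y0 t)) (at t within {0..})"
  shows "(\<exists>L. (y 1 \<longlongrightarrow> L) at_top \<and> ((\<lambda>r. asg_g s \<gamma> u r L) \<longlongrightarrow> 1) at_top) \<and>
    (\<forall>y0\<in>{0..<1}.
       ((u < s \<or> (u = s \<and> s < \<gamma>)) \<longrightarrow>
          (\<exists>L. (y y0 \<longlongrightarrow> L) at_top \<and> ((\<lambda>r. asg_g s \<gamma> u r L) \<longlongrightarrow> 0) at_top)) \<and>
       ((ereal u > ucheck s \<gamma> \<or> (s \<ge> \<gamma> \<and> s \<le> u \<and> ereal u \<le> ucheck s \<gamma>)) \<longrightarrow>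
          (\<exists>L. (y y0 \<longlongrightarrow> L) at_top \<and> ((\<lambda>r. asg_g s \<gamma> u r L) \<longlongrightarrow> 1) at_top)) \<and>
       ((s < \<gamma> \<and> s < u \<and> ereal u \<le> ucheck s \<gamma>) \<longrightarrow>
          (\<exists>L. (y y0 \<longlongrightarrow> L) at_top \<and>
             ((\<lambda>r. asg_g s \<gamma> u r L) \<longlongrightarrow> (if y0 \<le> ybar3 s \<gamma> u then 0 else 1)) at_top)))"
proof -
  interpret A: asgp s \<gamma> u using assms(1-3) by unfold_locales auto
  have D: "odeD s \<gamma> u (y y0)" if "y0 \<in> {0..1}" for y0
    using assms(1-3) init[OF that] ode[OF that] that by unfold_locales auto
  have G1': "((\<lambda>r. asg_g s \<gamma> u r 1) \<longlongrightarrow> 1) at_top"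
  proof (rule tendsto_eventually)
    show "\<forall>\<^sub>F r in at_top. asg_g s \<gamma> u r 1 = 1"
      using eventually_ge_at_top[of 0] by (rule eventually_mono) (use A.G1 in auto)
  qed
  have G0': "((\<lambda>r. asg_g s \<gamma> u r L) \<longlongrightarrow> 0) at_top" if "0 \<le> L" "L < 1" "drift s \<gamma> u L = 0" for L
  proof -
    interpret B: asgpL s \<gamma> u L using assms(1-3) that by unfold_locales auto
    show ?thesis by (rule B.G0)
  qed
  have D1: "drift s \<gamma> u 1 = 0" by (simp add: drift_def)
  have part0: "\<exists>L. (y 1 \<longlongrightarrow> L) at_top \<and> ((\<lambda>r. asg_g s \<gamma> u r L) \<longlongrightarrow> 1) at_top"
  proof (intro exI conjI)
    interpret odeD s \<gamma> u "y 1" using D[of 1] by simp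
    show "(y 1 \<longlongrightarrow> 1) at_top" using Y_const[OF D1] init[of 1] by simp
    show "((\<lambda>r. asg_g s \<gamma> u r 1) \<longlongrightarrow> 1) at_top" by (rule G1')
  qed
  have part1: "((u < s \<or> (u = s \<and> s < \<gamma>)) \<longrightarrow>
          (\<exists>L. (y y0 \<longlongrightarrow> L) at_top \<and> ((\<lambda>r. asg_g s \<gamma> u r L) \<longlongrightarrow> 0) at_top)) \<and>
       ((ereal u > ucheck s \<gamma> \<or> (s \<ge> \<gamma> \<and> s \<le> u \<and> ereal u \<le> ucheck s \<gamma>)) \<longrightarrow>
          (\<exists>L. (y y0 \<longlongrightarrow> L) at_top \<and> ((\<lambda>r. asg_g s \<gamma> u r L) \<longlongrightarrow> 1) at_top)) \<and>
       ((s < \<gamma> \<and> s < u \<and> ereal u \<le> ucheck s \<gamma>) \<longrightarrow>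
          (\<exists>L. (y y0 \<longlongrightarrow> L) at_top \<and>
             ((\<lambda>r. asg_g s \<gamma> u r L) \<longlongrightarrow> (if y0 \<le> ybar3 s \<gamma> u then 0 else 1)) at_top))"
    if y0: "y0 \<in> {0..<1}" for y0
  proof -
    interpret odeD s \<gamma> u "y y0" using D[of y0] y0 by simp
    have Y00: "y y0 0 = y0" using init y0 by simp
    have lt1: "\<And>t. 0 \<le> t \<Longrightarrow> y y0 t < 1" using Y_lt1 Y00 y0 by simp
    show ?thesis
    proof (intro conjI impI)
      assume c: "u < s \<or> (u = s \<and> s < \<gamma>)"
      obtain e where e: "0 < e" "e < 1" "drift s \<gamma> u e = 0"
        "\<forall>x. 0 \<le> x \<and> x < e \<longrightarrow> 0 < drift s \<gamma> u x" "\<forall>x. e < x \<and> x < 1 \<longrightarrow> drift s \<gamma> u x < 0"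
        using case_i[OF assms(1-3) c] by blast
      have "(y y0 \<longlongrightarrow> e) at_top" using conv_e[OF e(3) D1 _ e(4) e(5)] e Y00 y0 by simp
      moreover have "((\<lambda>r. asg_g s \<gamma> u r e) \<longlongrightarrow> 0) at_top" using G0' e by simp
      ultimately show "\<exists>L. (y y0 \<longlongrightarrow> L) at_top \<and> ((\<lambda>r. asg_g s \<gamma> u r L) \<longlongrightarrow> 0) at_top" by blast
    next
      assume c: "ereal u > ucheck s \<gamma> \<or> (s \<ge> \<gamma> \<and> s \<le> u \<and> ereal u \<le> ucheck s \<gamma>)"
      have pos: "\<forall>x. 0 \<le> x \<and> x < 1 \<longrightarrow> 0 < drift s \<gamma> u x" using case_ii[OF assms(1-3) c] .
      have "(y y0 \<longlongrightarrow> 1) at_top"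
      proof (rule conv_up)
        fix t :: real assume t: "0 \<le> t"
        show "y y0 t < 1 \<and> 0 < drift s \<gamma> u (y y0 t)" using lt1[OF t] Y_ge0[OF t] pos by auto
      next
        fix x assume "y y0 0 \<le> x" "x < 1"
        then show "0 < drift s \<gamma> u x" using pos Y00 y0 by auto
      qed
      then show "\<exists>L. (y y0 \<longlongrightarrow> L) at_top \<and> ((\<lambda>r. asg_g s \<gamma> u r L) \<longlongrightarrow> 1) at_top"
        using G1' by blast
    next
      assume c: "s < \<gamma> \<and> s < u \<and> ereal u \<le> ucheck s \<gamma>"
      then obtain y2 where r: "0 < y2" "y2 \<le> ybar3 s \<gamma> u" "ybar3 s \<gamma> u < 1" "drift s \<gamma> u y2 = 0"
        "drift s \<gamma> u (ybar3 s \<gamma> u) = 0"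
        "\<forall>x. 0 \<le> x \<and> x < y2 \<longrightarrow> 0 < drift s \<gamma> u x"
        "\<forall>x. y2 < x \<and> x < ybar3 s \<gamma> u \<longrightarrow> drift s \<gamma> u x < 0"
        "\<forall>x. ybar3 s \<gamma> u < x \<and> x < 1 \<longrightarrow> 0 < drift s \<gamma> u x"
        using case_iii[OF assms(1-3)] by blast
      show "\<exists>L. (y y0 \<longlongrightarrow> L) at_top \<and>
             ((\<lambda>r. asg_g s \<gamma> u r L) \<longlongrightarrow> (if y0 \<le> ybar3 s \<gamma> u then 0 else 1)) at_top"
      proof (cases "y0 < ybar3 s \<gamma> u")
        case True
        have "(y y0 \<longlongrightarrow> y2) at_top" using conv_e[OF r(4) r(5) r(2) r(6) r(7)] True Y00 by simp
        moreover have "((\<lambda>r. asg_g s \<gamma> u r y2) \<longlongrightarrow> 0) at_top" using G0' r by simp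
        ultimately show ?thesis using True by auto
      next
        case False
        show ?thesis
        proof (cases "y0 = ybar3 s \<gamma> u")
          case True
          have "(y y0 \<longlongrightarrow> ybar3 s \<gamma> u) at_top" using Y_const[OF r(5)] True Y00 by simp
          moreover have "((\<lambda>r. asg_g s \<gamma> u r (ybar3 s \<gamma> u)) \<longlongrightarrow> 0) at_top" using G0' r by simp
          ultimately show ?thesis using True by auto
        next
          case False
          then have gt: "ybar3 s \<gamma> u < y0" using \<open>\<not> y0 < ybar3 s \<gamma> u\<close> by simp
          have "(y y0 \<longlongrightarrow> 1) at_top"
          proof (rule conv_up)
            fix t :: real assume t: "0 \<le> t"
            have "ybar3 s \<gamma> u < y y0 t" using Y_eq(3)[OF r(5) t] gt Y00 by simp
            then show "y y0 t < 1 \<and> 0 < drift s \<gamma> u (y y0 t)" using lt1[OF t] r(8) by auto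
          next
            fix x assume "y y0 0 \<le> x" "x < 1"
            then show "0 < drift s \<gamma> u x" using r(8) gt Y00 by auto
          qed
          then show ?thesis using G1' gt by auto
        qed
      qed
    qed
  qed
  show ?thesis using part0 part1 by blast
qed


end
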